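(* Let $U\subset\mathbb R^2$ be an open set with coordinates $(x,y)$, let $h:U\to\mathbb R$ be a positive smooth function, and let $g_\Sigma=h^2(dx^2+dy^2)$, $\omega_\Sigma=h^2\,dx\wedge dy$. Let $V\subset\mathbb R$ be open and $\alpha=\alpha(z)$ a smooth nowhere vanishing function on $V$; let $A$ be an antiderivative of $\alpha$ ($A'=\alpha$) and let $\beta$ be defined by $\beta\alpha=e^A$. Let $l_2=l_2(x,y)$, $n_2=n_2(x,y)$ be smooth functions on $U$ with $d(l_2\,dx+n_2\,dy)=\omega_\Sigma$. On $M=U\times V\times\mathbb R$ with coordinates $(x,y,z,t)$ put $\theta_3=\frac1\beta(dt-l_2\,dx-n_2\,dy)$, $\theta_4=dz$, and define the metric $$g(X,Y)=e^{-A}g_\Sigma(X,Y)+\theta_3(X)\theta_3(Y)+\theta_4(X)\theta_4(Y).$$ Then $(M,g)$ admits a K\"ahler structure $\bar J$ with K\"ahler form $\bar\Omega=e^{-A}\omega_\Sigma+\theta_4\wedge\theta_3$ and a Hermitian structure $J$ with K\"ahler form $\Omega=e^{-A}\omega_\Sigma+\theta_3\wedge\theta_4$. The Ricci tensor of $(M,g)$ is $J$-invariant and $J$ is locally conformally K\"ahler. The Lee form of $(M,g,J)$ is $\theta=-\alpha\theta_4$. The scalar curvature of $(M,g)$ is $$\tau=2\Big(-\frac{(\Delta\ln h)e^A}{h^2}-2\alpha^2+2\alpha'+\frac{\beta''}{\beta}-2\Big(\frac{\beta'}{\beta}\Big)^2\Big),$$ where $\Delta f=f_{xx}+f_{yy}$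 and primes denote derivatives with respect to $z$.
   Context: For an almost Hermitian structure $J$ orthogonal with respect to $g$, its K\"ahler form is $\Omega(X,Y)=g(JX,Y)$. A Hermitian structure is an integrable orthogonal almost complex structure. The Lee form $\theta$ of a Hermitian surface $(M,g,J)$ is defined by $d\Omega=2\theta\wedge\Omega$. The Ricci tensor $\rho$ is $J$-invariant if $\rho(JX,JY)=\rho(X,Y)$ for all $X,Y$. The scalar curvature is $\tau=\mathrm{tr}_g\rho$. *)

theory Defs
  imports "HOL-Analysis.Analysis"
begin

fun Ck_on :: "nat \<Rightarrow> 'a::euclidean_space set \<Rightarrow> ('a \<Rightarrow> real) \<Rightarrow> bool" where
  "Ck_on 0 S f = continuous_on S f"
| "Ck_on (Suc k) S f = (f differentiable_on S \<and>
      (\<forall>b\<in>Basis. Ck_on k S (\<lambda>x. frechet_derivative f (at x) b)))"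

definition smooth_on :: "'a::euclidean_space set \<Rightarrow> ('a \<Rightarrow> real) \<Rightarrow> bool" where
  "smooth_on S f = (\<forall>k. Ck_on k S f)"

text \<open>A point p :: real^4 has coordinates (x,y,z,t) = (p$1, p$2, p$3, p$4).
  Coordinate vector fields are axis i 1.  Tensor fields are given by their components
  in the coordinate frame: a 1-form by w p i = w(d_i), a 2-form by w p i j = w(d_i,d_j),
  a 3-form by w p i j k, a (0,2)-tensor by T p i j, and an endomorphism field
  (a (1,1)-tensor) J by J p i j = i-th component of J(d_j).\<close>

type_synonym form1 = "real^4 \<Rightarrow> 4 \<Rightarrow> real"
type_synonym form2 = "real^4 \<Rightarrow> 4 \<Rightarrow> 4 \<Rightarrow> real"
type_synonym form3 = "real^4 \<Rightarrow> 4 \<Rightarrow> 4 \<Rightarrow> 4 \<Rightarrow> real"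
type_synonym endo = "real^4 \<Rightarrow> 4 \<Rightarrow> 4 \<Rightarrow> real"

definition pd :: "4 \<Rightarrow> (real^4 \<Rightarrow> real) \<Rightarrow> real^4 \<Rightarrow> real" where
  "pd i f p = frechet_derivative f (at p) (axis i 1)"

definition dx :: form1 where "dx p i = (if i = 1 then 1 else 0)"
definition dy :: form1 where "dy p i = (if i = 2 then 1 else 0)"
definition dz :: form1 where "dz p i = (if i = 3 then 1 else 0)"
definition dt :: form1 where "dt p i = (if i = 4 then 1 else 0)"

definition wedge11 :: "form1 \<Rightarrow> form1 \<Rightarrow> form2" where
  "wedge11 a b p i j = a p i * b p j - a p j * b p i"

definition wedge12 :: "form1 \<Rightarrow> form2 \<Rightarrow> form3" where
  "wedge12 a w p i j k = a p i * w p j k + a p j * w p k i + a p k * w p i j"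

definition ext_d1 :: "form1 \<Rightarrow> form2" where
  "ext_d1 a p i j = pd i (\<lambda>q. a q j) p - pd j (\<lambda>q. a q i) p"

definition ext_d2 :: "form2 \<Rightarrow> form3" where
  "ext_d2 w p i j k = pd i (\<lambda>q. w q j k) p + pd j (\<lambda>q. w q k i) p + pd k (\<lambda>q. w q i j) p"

definition metric_matrix :: "form2 \<Rightarrow> real^4 \<Rightarrow> real^4^4" where
  "metric_matrix g p = (\<chi> i j. g p i j)"

definition inv_metric :: "form2 \<Rightarrow> real^4 \<Rightarrow> 4 \<Rightarrow> 4 \<Rightarrow> real" where
  "inv_metric g p i j = matrix_inv (metric_matrix g p) $ i $ j"

text \<open>Christoffel symbols of the Levi-Civita connection: Gamma g p k i j = Gamma^k_{ij}.\<close>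
definition Gamma :: "form2 \<Rightarrow> real^4 \<Rightarrow> 4 \<Rightarrow> 4 \<Rightarrow> 4 \<Rightarrow> real" where
  "Gamma g p k i j = (\<Sum>l\<in>UNIV. inv_metric g p k l *
      (pd i (\<lambda>q. g q j l) p + pd j (\<lambda>q. g q i l) p - pd l (\<lambda>q. g q i j) p)) / 2"

definition Ricci :: "form2 \<Rightarrow> form2" where
  "Ricci g p i j = (\<Sum>k\<in>UNIV.
      pd k (\<lambda>q. Gamma g q k i j) p - pd j (\<lambda>q. Gamma g q k i k) p
      + (\<Sum>l\<in>UNIV. Gamma g p k k l * Gamma g p l i j - Gamma g p k j l * Gamma g p l i k))"

definition scalar_curv :: "form2 \<Rightarrow> real^4 \<Rightarrow> real" where
  "scalar_curv g p = (\<Sum>i\<in>UNIV. \<Sum>j\<in>UNIV. inv_metric g p i j * Ricci g p i j)"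

definition almost_complex_on :: "(real^4) set \<Rightarrow> endo \<Rightarrow> bool" where
  "almost_complex_on M J = (\<forall>p\<in>M. \<forall>i j.
      (\<Sum>k\<in>UNIV. J p i k * J p k j) = (if i = j then -1 else 0))"

definition orthogonal_on :: "(real^4) set \<Rightarrow> form2 \<Rightarrow> endo \<Rightarrow> bool" where
  "orthogonal_on M g J = (\<forall>p\<in>M. \<forall>i j.
      (\<Sum>k\<in>UNIV. \<Sum>l\<in>UNIV. J p k i * J p l j * g p k l) = g p i j)"

text \<open>Nijenhuis tensor N(d_j,d_k) = [Jd_j,Jd_k] - J[Jd_j,d_k] - J[d_j,Jd_k] - [d_j,d_k], i-th component.\<close>
definition nijenhuis :: "endo \<Rightarrow> real^4 \<Rightarrow> 4 \<Rightarrow> 4 \<Rightarrow> 4 \<Rightarrow> real" where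
  "nijenhuis J p i j k = (\<Sum>h\<in>UNIV.
        J p h j * pd h (\<lambda>q. J q i k) p - J p h k * pd h (\<lambda>q. J q i j) p
      - J p i h * pd j (\<lambda>q. J q h k) p + J p i h * pd k (\<lambda>q. J q h j) p)"

definition J_integrable_on :: "(real^4) set \<Rightarrow> endo \<Rightarrow> bool" where
  "J_integrable_on M J = (\<forall>p\<in>M. \<forall>i j k. nijenhuis J p i j k = 0)"

definition smooth_endo_on :: "(real^4) set \<Rightarrow> endo \<Rightarrow> bool" where
  "smooth_endo_on M J = (\<forall>i j. smooth_on M (\<lambda>p. J p i j))"

definition hermitian_on :: "(real^4) set \<Rightarrow> form2 \<Rightarrow> endo \<Rightarrow> bool" where
  "hermitian_on M g J = (smooth_endo_on M J \<and> almost_complex_on M J \<and>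
      orthogonal_on M g J \<and> J_integrable_on M J)"

definition kahler_form :: "form2 \<Rightarrow> endo \<Rightarrow> form2" where
  "kahler_form g J p i j = (\<Sum>k\<in>UNIV. J p k i * g p k j)"

definition kahler_on :: "(real^4) set \<Rightarrow> form2 \<Rightarrow> endo \<Rightarrow> bool" where
  "kahler_on M g J = (hermitian_on M g J \<and>
      (\<forall>p\<in>M. \<forall>i j k. ext_d2 (kahler_form g J) p i j k = 0))"

text \<open>Locally conformally Kaehler: every point has an open neighbourhood W and a smooth f on W
  such that the conformal metric e^f g (with Kaehler form e^f Omega) is Kaehler on W.\<close>
definition lck_on :: "(real^4) set \<Rightarrow> form2 \<Rightarrow> endo \<Rightarrow> bool" where
  "lck_on M g J = (hermitian_on M g J \<and> (\<forall>p\<in>M. \<exists>W f. open W \<and> p \<in> W \<and> W \<subseteq> M \<and>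
      smooth_on W f \<and>
      (\<forall>q\<in>W. \<forall>i j k. ext_d2 (\<lambda>r a b. exp (f r) * kahler_form g J r a b) q i j k = 0)))"

definition is_lee_form_on :: "(real^4) set \<Rightarrow> form2 \<Rightarrow> endo \<Rightarrow> form1 \<Rightarrow> bool" where
  "is_lee_form_on M g J \<theta> = (\<forall>p\<in>M. \<forall>i j k.
      ext_d2 (kahler_form g J) p i j k = 2 * wedge12 \<theta> (kahler_form g J) p i j k)"

definition ricci_J_invariant_on :: "(real^4) set \<Rightarrow> form2 \<Rightarrow> endo \<Rightarrow> bool" where
  "ricci_J_invariant_on M g J = (\<forall>p\<in>M. \<forall>i j.
      (\<Sum>k\<in>UNIV. \<Sum>l\<in>UNIV. J p k i * J p l j * Ricci g p k l) = Ricci g p i j)"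

definition xy :: "real^4 \<Rightarrow> real^2" where "xy p = vector [p$1, p$2]"

definition theta3 :: "(real \<Rightarrow> real) \<Rightarrow> (real^2 \<Rightarrow> real) \<Rightarrow> (real^2 \<Rightarrow> real) \<Rightarrow> form1" where
  "theta3 \<beta> l2 n2 p i = (dt p i - l2 (xy p) * dx p i - n2 (xy p) * dy p i) / \<beta> (p$3)"

definition theta4 :: form1 where "theta4 = dz"

definition gmet :: "(real^2 \<Rightarrow> real) \<Rightarrow> (real \<Rightarrow> real) \<Rightarrow> (real \<Rightarrow> real) \<Rightarrow>
    (real^2 \<Rightarrow> real) \<Rightarrow> (real^2 \<Rightarrow> real) \<Rightarrow> form2" where
  "gmet h A \<beta> l2 n2 p i j = exp (- A (p$3)) * (h (xy p))\<^sup>2 * (dx p i * dx p j + dy p i * dy p j)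
      + theta3 \<beta> l2 n2 p i * theta3 \<beta> l2 n2 p j + theta4 p i * theta4 p j"

definition omegaSigmaA :: "(real^2 \<Rightarrow> real) \<Rightarrow> (real \<Rightarrow> real) \<Rightarrow> form2" where
  "omegaSigmaA h A p i j = exp (- A (p$3)) * (h (xy p))\<^sup>2 * wedge11 dx dy p i j"

definition laplacian2 :: "(real^2 \<Rightarrow> real) \<Rightarrow> real^2 \<Rightarrow> real" where
  "laplacian2 f u =
     frechet_derivative (\<lambda>v. frechet_derivative f (at v) (axis 1 1)) (at u) (axis 1 1)
   + frechet_derivative (\<lambda>v. frechet_derivative f (at v) (axis 2 1)) (at u) (axis 2 1)"

end

theory Submission
  imports Defs
begin


definition Dv :: "'a::real_normed_vector \<Rightarrow> ('a \<Rightarrow> real) \<Rightarrow> 'a \<Rightarrow> real" where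
  "Dv b f p = frechet_derivative f (at p) b"

lemma pd_Dv: "pd i f p = Dv (axis i 1) f p"
  by (simp add: pd_def Dv_def)

lemma Dv_has: "(f has_derivative D) (at p) \<Longrightarrow> Dv b f p = D b"
  by (metis Dv_def frechet_derivative_at)

lemma Dv_works: "f differentiable (at p) \<Longrightarrow> (f has_derivative (\<lambda>v. Dv v f p)) (at p)"
  unfolding Dv_def by (metis frechet_derivative_works eta_contract_eq)

lemma Dv_const[simp]: "Dv b (\<lambda>x. c) p = 0"
  by (rule Dv_has) (rule has_derivative_const)

lemma Dv_add[simp]: "f differentiable (at p) \<Longrightarrow> g differentiable (at p) \<Longrightarrow>
   Dv b (\<lambda>x. f x + g x) p = Dv b f p + Dv b g p"
  by (rule Dv_has) (intro has_derivative_add Dv_works)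

lemma Dv_diff[simp]: "f differentiable (at p) \<Longrightarrow> g differentiable (at p) \<Longrightarrow>
   Dv b (\<lambda>x. f x - g x) p = Dv b f p - Dv b g p"
  by (rule Dv_has) (intro has_derivative_diff Dv_works)

lemma Dv_minus[simp]: "f differentiable (at p) \<Longrightarrow>
   Dv b (\<lambda>x. - f x) p = - Dv b f p"
  by (rule Dv_has) (intro has_derivative_minus Dv_works)

lemma Dv_mult[simp]: "f differentiable (at p) \<Longrightarrow> g differentiable (at p) \<Longrightarrow>
   Dv b (\<lambda>x. f x * g x) p = f p * Dv b g p + Dv b f p * g p"
  by (rule Dv_has) (intro has_derivative_mult Dv_works)

lemma Dv_divide[simp]: "f differentiable (at p) \<Longrightarrow> g differentiable (at p) \<Longrightarrow> g p \<noteq> 0 \<Longrightarrow>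
   Dv b (\<lambda>x. f x / g x) p = (Dv b f p * g p - f p * Dv b g p) / (g p * g p)"
  by (rule Dv_has) (intro has_derivative_divide' Dv_works)

lemma Dv_power[simp]: "f differentiable (at p) \<Longrightarrow>
   Dv b (\<lambda>x. f x ^ n) p = of_nat n * Dv b f p * f p ^ (n - 1)"
  by (rule Dv_has) (intro has_derivative_power Dv_works)

lemma Dv_ln: "f differentiable (at p) \<Longrightarrow> f p > 0 \<Longrightarrow>
   Dv b (\<lambda>x. ln (f x)) p = Dv b f p / f p"
  apply (rule Dv_has)
  apply (rule has_derivative_eq_rhs)
   apply (rule has_derivative_ln, assumption, erule Dv_works)
  by (simp add: field_simps)

lemma Dv_local: "open S \<Longrightarrow> p \<in> S \<Longrightarrow> (\<And>x. x \<in> S \<Longrightarrow> f x = g x) \<Longrightarrow> Dv b f p = Dv b g p"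
proof -
  assume S: "open S" "p \<in> S" and e: "\<And>x. x \<in> S \<Longrightarrow> f x = g x"
  have "(f has_derivative D) (at p) = (g has_derivative D) (at p)" for D
    using has_derivative_transform_within_open[OF _ S, of f D UNIV g]
      has_derivative_transform_within_open[OF _ S, of g D UNIV f] e by auto
  thus ?thesis unfolding Dv_def frechet_derivative_def by simp
qed

lemma diff_local: "open S \<Longrightarrow> p \<in> S \<Longrightarrow> (\<And>x. x \<in> S \<Longrightarrow> f x = g x) \<Longrightarrow>
   f differentiable (at p) \<Longrightarrow> g differentiable (at p)"
  unfolding differentiable_def
  using has_derivative_transform_within_open by metis

lemma has_derivative_p3:
  assumes "(\<psi> has_real_derivative d) (at (p$3))"
  shows "((\<lambda>q::real^4. \<psi> (q$3)) has_derivative (\<lambda>v. d * v$3)) (at p)"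
proof -
  have "((\<lambda>q::real^4. q$3) has_derivative (\<lambda>v. v$3)) (at p)"
    by (rule bounded_linear_imp_has_derivative) (rule bounded_linear_vec_nth)
  from has_derivative_compose[OF this has_field_derivative_imp_has_derivative[OF assms]]
  show ?thesis .
qed

lemma lin_xy: "linear xy"
  by (rule linearI) (auto simp: xy_def vec_eq_iff vector_def forall_2)

lemma bl_xy: "bounded_linear xy"
  using lin_xy linear_conv_bounded_linear by blast

lemma has_derivative_xy:
  assumes "\<phi> differentiable (at (xy p))"
  shows "((\<lambda>q. \<phi> (xy q)) has_derivative (\<lambda>v. Dv (xy v) \<phi> (xy p))) (at p)"
  using has_derivative_compose[OF bounded_linear_imp_has_derivative[OF bl_xy] Dv_works[OF assms]] .

lemma xy_axis1: "xy (axis 1 1) = axis 1 1"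
  by (simp add: xy_def vec_eq_iff vector_def forall_2 axis_def)
lemma xy_axis2: "xy (axis 2 1) = axis 2 1"
  by (simp add: xy_def vec_eq_iff vector_def forall_2 axis_def)
lemma xy_axis3: "xy (axis 3 1) = 0"
  by (simp add: xy_def vec_eq_iff vector_def forall_2 axis_def)
lemma xy_axis4: "xy (axis 4 1) = 0"
  by (simp add: xy_def vec_eq_iff vector_def forall_2 axis_def)

lemma diff_xy: fixes \<phi> :: "real^2 \<Rightarrow> real" assumes "\<phi> differentiable (at (xy p))" shows "(\<lambda>q. \<phi> (xy q)) differentiable (at p)"
  using has_derivative_xy[OF assms] by (rule differentiableI)

lemma Dv_p3: "(\<psi> has_real_derivative d) (at (p$3)) \<Longrightarrow>
  Dv (axis i 1) (\<lambda>q::real^4. \<psi> (q$3)) p = (if i = 3 then d else 0)"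
  using Dv_has[OF has_derivative_p3] by (simp add: axis_def)

lemma diff_p3: assumes "(\<psi> has_real_derivative d) (at (p$3))" shows "(\<lambda>q::real^4. \<psi> (q$3)) differentiable (at p)"
  using has_derivative_p3[OF assms] by (rule differentiableI)


lemma Dv_xy: fixes \<phi> :: "real^2 \<Rightarrow> real"
  assumes a: "\<phi> differentiable (at (xy p))"
  shows "Dv (axis i 1) (\<lambda>q. \<phi> (xy q)) p = (if i = 1 then Dv (axis 1 1) \<phi> (xy p) else if i = 2 then Dv (axis 2 1) \<phi> (xy p) else 0)"
proof -
  have l: "linear (\<lambda>v. Dv v \<phi> (xy p))"
    using Dv_works[OF a] has_derivative_linear by blast
  have e: "Dv (axis i 1) (\<lambda>q. \<phi> (xy q)) p = Dv (xy (axis i 1)) \<phi> (xy p)"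
    by (rule Dv_has[OF has_derivative_xy[OF a]])
  have z: "Dv 0 \<phi> (xy p) = 0" using linear_0[OF l] by simp
  have "i = 1 \<or> i = 2 \<or> i = 3 \<or> i = 4" using exhaust_4 by blast
  then show ?thesis
  proof (elim disjE)
    assume "i = 1" thus ?thesis using e xy_axis1 by simp
  next
    assume "i = 2" thus ?thesis using e xy_axis2 by simp
  next
    assume "i = 3" thus ?thesis using e xy_axis3 z by simp
  next
    assume "i = 4" thus ?thesis using e xy_axis4 z by simp
  qed
qed


section \<open>Smoothness calculus\<close>

lemma Ck_on_Dv: "Ck_on (Suc k) S f = (f differentiable_on S \<and> (\<forall>b\<in>Basis. Ck_on k S (\<lambda>x. Dv b f x)))"
  by (simp add: Dv_def)

declare Ck_on.simps(2)[simp del] Ck_on_Dv[simp]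

lemma diff_on_at: "open S \<Longrightarrow> f differentiable_on S \<Longrightarrow> x \<in> S \<Longrightarrow> f differentiable (at x)"
  using differentiable_on_eq_differentiable_at by blast

lemma Ck_on_cong:
  assumes S: "open S" and e: "\<And>x. x \<in> S \<Longrightarrow> f x = g x" and c: "Ck_on k S f"
  shows "Ck_on k S g"
  using e c
proof (induction k arbitrary: f g)
  case 0
  thus ?case using continuous_on_cong[of S S f g] by simp
next
  case (Suc k)
  have fd: "f differentiable_on S" using Suc.prems(2) by simp
  have gd: "g differentiable_on S"
    unfolding differentiable_on_eq_differentiable_at[OF S]
  proof
    fix x assume x: "x \<in> S"
    show "g differentiable (at x)"
      using diff_local[OF S x Suc.prems(1) diff_on_at[OF S fd x]] .
  qed
  have "Ck_on k S (\<lambda>x. Dv b g x)" if b: "b \<in> Basis" for b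
  proof -
    have "Ck_on k S (\<lambda>x. Dv b f x)" using Suc.prems(2) b by (simp add: Ck_on_Dv)
    moreover have "Dv b f x = Dv b g x" if "x \<in> S" for x
      using Dv_local[OF S that, of f g] Suc.prems(1) by blast
    ultimately show ?thesis using Suc.IH[of "\<lambda>x. Dv b f x" "\<lambda>x. Dv b g x"] by blast
  qed
  thus ?case using gd by (simp add: Ck_on_Dv)
qed

lemma Ck_on_mono: "Ck_on (Suc k) S f \<Longrightarrow> Ck_on k S f"
proof (induction k arbitrary: f)
  case 0
  thus ?case using differentiable_imp_continuous_on by (simp add: Ck_on_Dv) blast
next
  case (Suc k)
  thus ?case by (simp add: Ck_on_Dv)
qed

lemma Ck_on_mono_le: "Ck_on k S f \<Longrightarrow> m \<le> k \<Longrightarrow> Ck_on m S f"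
proof (induction k)
  case 0 thus ?case by simp
next
  case (Suc k)
  thus ?case using Ck_on_mono le_Suc_eq by blast
qed

lemma Ck_on_const: "open S \<Longrightarrow> Ck_on k S (\<lambda>x. c)"
proof (induction k arbitrary: c)
  case 0 thus ?case by simp
next
  case (Suc k)
  have "Ck_on k S (\<lambda>x. Dv b (\<lambda>x. c) x)" for b using Suc by simp
  thus ?case by (simp add: Ck_on_Dv)
qed

lemma Ck_on_add:
  assumes S: "open S"
  shows "Ck_on k S f \<Longrightarrow> Ck_on k S g \<Longrightarrow> Ck_on k S (\<lambda>x. f x + g x)"
proof (induction k arbitrary: f g)
  case 0 thus ?case by (simp add: continuous_on_add)
next
  case (Suc k)
  have fd: "f differentiable_on S" and gd: "g differentiable_on S" using Suc.prems by auto
  have "Ck_on k S (\<lambda>x. Dv b (\<lambda>x. f x + g x) x)" if b: "b \<in> Basis" for b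
  proof (rule Ck_on_cong[OF S])
    show "Ck_on k S (\<lambda>x. Dv b f x + Dv b g x)"
      using Suc.IH Suc.prems b by (simp add: Ck_on_Dv)
    show "Dv b f x + Dv b g x = Dv b (\<lambda>x. f x + g x) x" if "x \<in> S" for x
      using Dv_add[OF diff_on_at[OF S fd that] diff_on_at[OF S gd that]] by simp
  qed
  thus ?case using fd gd by (simp add: Ck_on_Dv differentiable_on_add)
qed

lemma Ck_on_mult:
  assumes S: "open S"
  shows "Ck_on k S f \<Longrightarrow> Ck_on k S g \<Longrightarrow> Ck_on k S (\<lambda>x. f x * g x)"
proof (induction k arbitrary: f g)
  case 0 thus ?case by (simp add: continuous_on_mult)
next
  case (Suc k)
  have fd: "f differentiable_on S" and gd: "g differentiable_on S" using Suc.prems by auto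
  have fk: "Ck_on k S f" and gk: "Ck_on k S g" using Suc.prems Ck_on_mono by blast+
  have "Ck_on k S (\<lambda>x. Dv b (\<lambda>x. f x * g x) x)" if b: "b \<in> Basis" for b
  proof (rule Ck_on_cong[OF S])
    have "Ck_on k S (\<lambda>x. Dv b g x)" "Ck_on k S (\<lambda>x. Dv b f x)"
      using Suc.prems b by (auto simp add: Ck_on_Dv)
    then show "Ck_on k S (\<lambda>x. f x * Dv b g x + Dv b f x * g x)"
      using Suc.IH fk gk Ck_on_add[OF S] by blast
    show "f x * Dv b g x + Dv b f x * g x = Dv b (\<lambda>x. f x * g x) x" if "x \<in> S" for x
      using Dv_mult[OF diff_on_at[OF S fd that] diff_on_at[OF S gd that]] by simp
  qed
  thus ?case using fd gd by (simp add: Ck_on_Dv differentiable_on_mult)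
qed

lemma Ck_on_sum:
  assumes S: "open S" and F: "finite F"
  shows "(\<And>c. c \<in> F \<Longrightarrow> Ck_on k S (f c)) \<Longrightarrow> Ck_on k S (\<lambda>x. \<Sum>c\<in>F. f c x)"
  using F
proof (induction F rule: finite_induct)
  case empty thus ?case using Ck_on_const[OF S] by simp
next
  case (insert a F)
  thus ?case using Ck_on_add[OF S, of k "f a" "\<lambda>x. \<Sum>c\<in>F. f c x"] by simp
qed

lemma Ck_on_comp_lin:
  fixes L :: "'a::euclidean_space \<Rightarrow> 'b::euclidean_space"
  assumes L: "linear L" and S: "open S" and T: "open T" and ST: "\<And>x. x \<in> S \<Longrightarrow> L x \<in> T"
  shows "Ck_on k T \<phi> \<Longrightarrow> Ck_on k S (\<lambda>x. \<phi> (L x))"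
proof (induction k arbitrary: \<phi>)
  case 0
  have "continuous_on S L" using L linear_continuous_on linear_conv_bounded_linear by blast
  moreover have "L ` S \<subseteq> T" using ST by auto
  ultimately show ?case using 0 continuous_on_compose2 by (metis Ck_on.simps(1))
next
  case (Suc k)
  have LD: "(L has_derivative L) (at x)" for x
    using L bounded_linear_imp_has_derivative linear_conv_bounded_linear by blast
  have \<phi>d: "\<phi> differentiable_on T" using Suc.prems by simp
  have \<phi>x: "\<phi> differentiable (at (L x))" if "x \<in> S" for x
    using diff_on_at[OF T \<phi>d ST[OF that]] .
  have dd: "(\<lambda>x. \<phi> (L x)) differentiable (at x)" if "x \<in> S" for x
  proof -
    have "L differentiable (at x)" using LD differentiableI by blast
    thus ?thesis using differentiable_compose[of \<phi> L x UNIV] \<phi>x[OF that] by blast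
  qed
  have "Ck_on k S (\<lambda>x. Dv b (\<lambda>x. \<phi> (L x)) x)" if b: "b \<in> Basis" for b
  proof (rule Ck_on_cong[OF S])
    show "Ck_on k S (\<lambda>x. \<Sum>c\<in>Basis. (L b \<bullet> c) * Dv c \<phi> (L x))"
    proof (rule Ck_on_sum[OF S finite_Basis])
      fix c :: 'b assume c: "c \<in> Basis"
      have "Ck_on k T (\<lambda>y. Dv c \<phi> y)" using Suc.prems c by (simp add: Ck_on_Dv)
      hence "Ck_on k S (\<lambda>x. Dv c \<phi> (L x))" using Suc.IH by blast
      thus "Ck_on k S (\<lambda>x. (L b \<bullet> c) * Dv c \<phi> (L x))"
        using Ck_on_mult[OF S Ck_on_const[OF S]] by blast
    qed
    show "(\<Sum>c\<in>Basis. (L b \<bullet> c) * Dv c \<phi> (L x)) = Dv b (\<lambda>x. \<phi> (L x)) x" if x: "x \<in> S" for x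
    proof -
      have "Dv b (\<lambda>x. \<phi> (L x)) x = Dv (L b) \<phi> (L x)"
        by (rule Dv_has[OF has_derivative_compose[OF LD Dv_works[OF \<phi>x[OF x]]]])
      also have "\<dots> = (\<Sum>c\<in>Basis. (L b \<bullet> c) * Dv c \<phi> (L x))"
      proof -
        have l: "linear (\<lambda>v. Dv v \<phi> (L x))"
          using Dv_works[OF \<phi>x[OF x]] has_derivative_linear by blast
        have "Dv (L b) \<phi> (L x) = Dv (\<Sum>c\<in>Basis. (L b \<bullet> c) *\<^sub>R c) \<phi> (L x)"
          by (simp add: euclidean_representation)
        also have "\<dots> = (\<Sum>c\<in>Basis. Dv ((L b \<bullet> c) *\<^sub>R c) \<phi> (L x))"
          using linear_sum[OF l, of "\<lambda>c. (L b \<bullet> c) *\<^sub>R c" Basis] by simp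
        also have "\<dots> = (\<Sum>c\<in>Basis. (L b \<bullet> c) *\<^sub>R Dv c \<phi> (L x))"
          using linear_scale[OF l] by simp
        finally show ?thesis by simp
      qed
      finally show ?thesis by simp
    qed
  qed
  moreover have "(\<lambda>x. \<phi> (L x)) differentiable_on S"
    using dd differentiable_on_eq_differentiable_at[OF S] by blast
  ultimately show ?case by (simp add: Ck_on_Dv)
qed

lemma Dv_real_has: "(f has_real_derivative d) (at z) \<Longrightarrow> Dv 1 f z = d"
  using Dv_has[OF has_field_derivative_imp_has_derivative] by simp

lemma Ck_on_real_ode:
  fixes f f' :: "real \<Rightarrow> real"
  assumes V: "open V" and d: "\<And>z. z \<in> V \<Longrightarrow> (f has_real_derivative f' z) (at z)" and c: "Ck_on k V f'"
  shows "Ck_on (Suc k) V f"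
proof -
  have "f differentiable_on V"
    unfolding differentiable_on_eq_differentiable_at[OF V]
    using d real_differentiable_def by blast
  moreover have "Ck_on k V (\<lambda>x. Dv 1 f x)"
    using Ck_on_cong[OF V _ c, of "\<lambda>x. Dv 1 f x"] Dv_real_has[OF d] by metis
  ultimately show ?thesis by (simp add: Ck_on_Dv Basis_real_def)
qed

lemma Ck_real_deriv:
  fixes f :: "real \<Rightarrow> real"
  assumes V: "open V" and c: "Ck_on (Suc k) V f" and z: "z \<in> V"
  shows "(f has_real_derivative deriv f z) (at z)"
proof -
  have "f differentiable_on V" using c by simp
  hence "f differentiable (at z)" using diff_on_at[OF V _ z] by blast
  thus ?thesis using DERIV_deriv_iff_real_differentiable by blast
qed

lemma Ck_real_deriv_fun:
  fixes f :: "real \<Rightarrow> real"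
  assumes V: "open V" and c: "Ck_on (Suc k) V f"
  shows "Ck_on k V (deriv f)"
proof -
  have c1: "Ck_on k V (\<lambda>x. Dv 1 f x)" using c by (simp add: Ck_on_Dv Basis_real_def)
  show ?thesis
  proof (rule Ck_on_cong[OF V _ c1])
    fix x assume "x \<in> V"
    thus "Dv 1 f x = deriv f x"
      using Dv_real_has[OF Ck_real_deriv[OF V c]] by blast
  qed
qed


section \<open>The construction\<close>


abbreviation e1 :: "real^2" where "e1 \<equiv> axis 1 1"
abbreviation e2 :: "real^2" where "e2 \<equiv> axis 2 1"

lemma smooth_diff: "smooth_on S f \<Longrightarrow> open S \<Longrightarrow> u \<in> S \<Longrightarrow> f differentiable (at u)"
  unfolding smooth_on_def using diff_on_at[of S f u] Ck_on_Dv[of 0 S f] by blast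

lemma smooth_Dv: "smooth_on S f \<Longrightarrow> b \<in> Basis \<Longrightarrow> smooth_on S (Dv b f)"
  unfolding smooth_on_def using Ck_on_Dv by blast

lemma e1B: "e1 \<in> Basis" and e2B: "e2 \<in> Basis" by simp_all

locale cdata =
  fixes U :: "(real^2) set" and V :: "real set"
    and h l2 n2 :: "real^2 \<Rightarrow> real" and \<alpha> A \<beta> :: "real \<Rightarrow> real"
  assumes oU: "open U" and sh: "smooth_on U h" and hpos: "\<forall>u\<in>U. h u > 0"
    and oV: "open V" and sa: "smooth_on V \<alpha>" and anz: "\<forall>z\<in>V. \<alpha> z \<noteq> 0"
    and dA: "\<forall>z\<in>V. (A has_real_derivative \<alpha> z) (at z)"
    and ba: "\<forall>z\<in>V. \<beta> z * \<alpha> z = exp (A z)"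
    and sl: "smooth_on U l2" and sn: "smooth_on U n2"
    and rel: "\<forall>u\<in>U. frechet_derivative n2 (at u) (axis 1 1) - frechet_derivative l2 (at u) (axis 2 1)
               = (h u)\<^sup>2"
begin

definition "MM = {p :: real^4. xy p \<in> U \<and> p$3 \<in> V}"
definition "gg = gmet h A \<beta> l2 n2"

lemma open_MM: "open MM"
proof -
  have "MM = xy -` U \<inter> (\<lambda>p. p$3) -` V" unfolding MM_def by auto
  moreover have "open (xy -` U)"
    using continuous_open_vimage[OF oU] bl_xy linear_continuous_at by blast
  moreover have "open ((\<lambda>p::real^4. p$3) -` V)" using open_vimage_vec_nth[OF oV] .
  ultimately show ?thesis by auto
qed

lemma MM_U: "p \<in> MM \<Longrightarrow> xy p \<in> U" and MM_V: "p \<in> MM \<Longrightarrow> p$3 \<in> V"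
  unfolding MM_def by auto

lemma sa_k: "Ck_on k V \<alpha>" using sa smooth_on_def by blast

lemma a_deriv: "z \<in> V \<Longrightarrow> (\<alpha> has_real_derivative deriv \<alpha> z) (at z)"
  using Ck_real_deriv[OF oV sa_k] by blast

lemma a1_k: "Ck_on k V (deriv \<alpha>)" using Ck_real_deriv_fun[OF oV sa_k] by blast

lemma A_k: "Ck_on k V A"
proof -
  have "Ck_on (Suc k) V A" for k using Ck_on_real_ode[OF oV _ sa_k] dA by blast
  thus ?thesis using Ck_on_mono by blast
qed

lemma C0_of_der: "(\<And>z. z \<in> V \<Longrightarrow> (f has_real_derivative f' z) (at z)) \<Longrightarrow> Ck_on 0 V f"
  using DERIV_isCont continuous_at_imp_continuous_on by (metis Ck_on.simps(1))

lemma E_der: "z \<in> V \<Longrightarrow> ((\<lambda>z. exp (- A z)) has_real_derivative (- \<alpha> z * exp (- A z))) (at z)"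
  using dA by (auto intro!: derivative_eq_intros)

lemma Ei_der: "z \<in> V \<Longrightarrow> ((\<lambda>z. exp (A z)) has_real_derivative (\<alpha> z * exp (A z))) (at z)"
  using dA by (auto intro!: derivative_eq_intros)

lemma E_k: "Ck_on k V (\<lambda>z. exp (- A z))"
proof (induction k)
  case 0 show ?case using C0_of_der[OF E_der] by blast
next
  case (Suc k)
  have "Ck_on k V (\<lambda>z. - \<alpha> z * exp (- A z))"
    using Ck_on_mult[OF oV Ck_on_mult[OF oV Ck_on_const[OF oV] sa_k] Suc, of "-1"] by simp
  thus ?case using Ck_on_real_ode[OF oV E_der] by blast
qed

lemma Ei_k: "Ck_on k V (\<lambda>z. exp (A z))"
proof (induction k)
  case 0 show ?case using C0_of_der[OF Ei_der] by blast
next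
  case (Suc k)
  have "Ck_on k V (\<lambda>z. \<alpha> z * exp (A z))"
    using Ck_on_mult[OF oV sa_k Suc] by simp
  thus ?case using Ck_on_real_ode[OF oV Ei_der] by blast
qed

lemma w_der: "z \<in> V \<Longrightarrow> ((\<lambda>z. 1 / \<alpha> z) has_real_derivative (- deriv \<alpha> z * (1 / \<alpha> z) * (1 / \<alpha> z))) (at z)"
  using a_deriv anz by (auto intro!: derivative_eq_intros simp: field_simps power2_eq_square)

lemma w_k: "Ck_on k V (\<lambda>z. 1 / \<alpha> z)"
proof (induction k)
  case 0 show ?case using C0_of_der[OF w_der] by blast
next
  case (Suc k)
  have "Ck_on k V (\<lambda>z. - deriv \<alpha> z * (1 / \<alpha> z) * (1 / \<alpha> z))"
    using Ck_on_mult[OF oV Ck_on_mult[OF oV Ck_on_mult[OF oV Ck_on_const[OF oV] a1_k] Suc] Suc, of "-1"] by simp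
  thus ?case using Ck_on_real_ode[OF oV w_der] by blast
qed

lemma b_eq: "z \<in> V \<Longrightarrow> \<beta> z = exp (A z) * (1 / \<alpha> z)"
proof -
  assume z: "z \<in> V"
  have "\<beta> z * \<alpha> z = exp (A z)" "\<alpha> z \<noteq> 0" using ba anz z by auto
  hence "\<beta> z = exp (A z) / \<alpha> z" by (simp add: eq_divide_eq)
  thus ?thesis by simp
qed

lemma b_k: "Ck_on k V \<beta>"
  using Ck_on_cong[OF oV _ Ck_on_mult[OF oV Ei_k w_k]] b_eq by metis

lemma bi_eq: "z \<in> V \<Longrightarrow> 1 / \<beta> z = \<alpha> z * exp (- A z)"
proof -
  assume z: "z \<in> V"
  have "\<beta> z = exp (A z) * (1 / \<alpha> z)" "\<alpha> z \<noteq> 0" using b_eq anz z by auto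
  thus ?thesis by (simp add: exp_minus divide_inverse)
qed

lemma bi_k: "Ck_on k V (\<lambda>z. 1 / \<beta> z)"
  using Ck_on_cong[OF oV _ Ck_on_mult[OF oV sa_k E_k]] bi_eq by metis

lemma b_deriv: "z \<in> V \<Longrightarrow> (\<beta> has_real_derivative deriv \<beta> z) (at z)"
  using Ck_real_deriv[OF oV b_k] by blast

lemma b1_deriv: "z \<in> V \<Longrightarrow> (deriv \<beta> has_real_derivative deriv (deriv \<beta>) z) (at z)"
  using Ck_real_deriv[OF oV Ck_real_deriv_fun[OF oV b_k]] by blast

lemma bnz: "z \<in> V \<Longrightarrow> \<beta> z \<noteq> 0"
  using ba by (metis exp_not_eq_zero mult_zero_left)

lemma ba_deriv: "z \<in> V \<Longrightarrow> deriv \<beta> z * \<alpha> z + \<beta> z * deriv \<alpha> z = \<alpha> z * (\<beta> z * \<alpha> z)"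
proof -
  assume z: "z \<in> V"
  have d1: "((\<lambda>z. \<beta> z * \<alpha> z) has_real_derivative (deriv \<beta> z * \<alpha> z + \<beta> z * deriv \<alpha> z)) (at z)"
    using b_deriv[OF z] a_deriv[OF z] by (auto intro!: derivative_eq_intros)
  have d2: "((\<lambda>z. \<beta> z * \<alpha> z) has_real_derivative (\<alpha> z * exp (A z))) (at z)"
    by (rule has_field_derivative_transform_within_open[OF Ei_der[OF z] oV z]) (use ba in auto)
  show ?thesis using DERIV_unique[OF d1 d2] ba z by simp
qed

lemma l2d: "u \<in> U \<Longrightarrow> l2 differentiable (at u)" using smooth_diff[OF sl oU] .
lemma n2d: "u \<in> U \<Longrightarrow> n2 differentiable (at u)" using smooth_diff[OF sn oU] .
lemma hd: "u \<in> U \<Longrightarrow> h differentiable (at u)" using smooth_diff[OF sh oU] .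
lemma l2d1: "u \<in> U \<Longrightarrow> Dv e1 l2 differentiable (at u)" using smooth_diff[OF smooth_Dv[OF sl e1B] oU] .
lemma l2d2: "u \<in> U \<Longrightarrow> Dv e2 l2 differentiable (at u)" using smooth_diff[OF smooth_Dv[OF sl e2B] oU] .
lemma n2d1: "u \<in> U \<Longrightarrow> Dv e1 n2 differentiable (at u)" using smooth_diff[OF smooth_Dv[OF sn e1B] oU] .
lemma n2d2: "u \<in> U \<Longrightarrow> Dv e2 n2 differentiable (at u)" using smooth_diff[OF smooth_Dv[OF sn e2B] oU] .
lemma hd1: "u \<in> U \<Longrightarrow> Dv e1 h differentiable (at u)" using smooth_diff[OF smooth_Dv[OF sh e1B] oU] .
lemma hd2: "u \<in> U \<Longrightarrow> Dv e2 h differentiable (at u)" using smooth_diff[OF smooth_Dv[OF sh e2B] oU] .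

definition "Lq q = l2 (xy q)"
definition "Nq q = n2 (xy q)"
definition "Hq q = h (xy q)"
definition "L1 q = Dv e1 l2 (xy q)"
definition "L2 q = Dv e2 l2 (xy q)"
definition "N1 q = Dv e1 n2 (xy q)"
definition "N2 q = Dv e2 n2 (xy q)"
definition "H1 q = Dv e1 h (xy q)"
definition "H2 q = Dv e2 h (xy q)"
definition "Eq q = exp (- A (q$3))"
definition "aq q = \<alpha> (q$3)"
definition "bq q = \<beta> (q$3)"
definition "b1q q = deriv \<beta> (q$3)"

lemma Dv_Lq: assumes "p \<in> MM" shows "Dv (axis i 1) Lq p = (if i = 1 then L1 p else if i = 2 then L2 p else 0)"
  unfolding Lq_def L1_def L2_def by (rule Dv_xy[OF l2d[OF MM_U[OF assms]]])
lemma Dv_Nq: assumes "p \<in> MM" shows "Dv (axis i 1) Nq p = (if i = 1 then N1 p else if i = 2 then N2 p else 0)"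
  unfolding Nq_def N1_def N2_def by (rule Dv_xy[OF n2d[OF MM_U[OF assms]]])
lemma Dv_Hq: assumes "p \<in> MM" shows "Dv (axis i 1) Hq p = (if i = 1 then H1 p else if i = 2 then H2 p else 0)"
  unfolding Hq_def H1_def H2_def by (rule Dv_xy[OF hd[OF MM_U[OF assms]]])
lemma Dv_L1: assumes "p \<in> MM" shows "Dv (axis i 1) L1 p = (if i = 1 then Dv e1 (Dv e1 l2) (xy p) else if i = 2 then Dv e2 (Dv e1 l2) (xy p) else 0)"
  unfolding L1_def by (rule Dv_xy[OF l2d1[OF MM_U[OF assms]]])
lemma Dv_L2: assumes "p \<in> MM" shows "Dv (axis i 1) L2 p = (if i = 1 then Dv e1 (Dv e2 l2) (xy p) else if i = 2 then Dv e2 (Dv e2 l2) (xy p) else 0)"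
  unfolding L2_def by (rule Dv_xy[OF l2d2[OF MM_U[OF assms]]])
lemma Dv_N1: assumes "p \<in> MM" shows "Dv (axis i 1) N1 p = (if i = 1 then Dv e1 (Dv e1 n2) (xy p) else if i = 2 then Dv e2 (Dv e1 n2) (xy p) else 0)"
  unfolding N1_def by (rule Dv_xy[OF n2d1[OF MM_U[OF assms]]])
lemma Dv_N2: assumes "p \<in> MM" shows "Dv (axis i 1) N2 p = (if i = 1 then Dv e1 (Dv e2 n2) (xy p) else if i = 2 then Dv e2 (Dv e2 n2) (xy p) else 0)"
  unfolding N2_def by (rule Dv_xy[OF n2d2[OF MM_U[OF assms]]])
lemma Dv_H1: assumes "p \<in> MM" shows "Dv (axis i 1) H1 p = (if i = 1 then Dv e1 (Dv e1 h) (xy p) else if i = 2 then Dv e2 (Dv e1 h) (xy p) else 0)"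
  unfolding H1_def by (rule Dv_xy[OF hd1[OF MM_U[OF assms]]])
lemma Dv_H2: assumes "p \<in> MM" shows "Dv (axis i 1) H2 p = (if i = 1 then Dv e1 (Dv e2 h) (xy p) else if i = 2 then Dv e2 (Dv e2 h) (xy p) else 0)"
  unfolding H2_def by (rule Dv_xy[OF hd2[OF MM_U[OF assms]]])

lemma Dv_Eq: assumes "p \<in> MM" shows "Dv (axis i 1) Eq p = (if i = 3 then - aq p * Eq p else 0)"
  unfolding Eq_def aq_def by (rule Dv_p3[OF E_der[OF MM_V[OF assms]]])
lemma Dv_aq: assumes "p \<in> MM" shows "Dv (axis i 1) aq p = (if i = 3 then deriv \<alpha> (p$3) else 0)"
  unfolding aq_def by (rule Dv_p3[OF a_deriv[OF MM_V[OF assms]]])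
lemma Dv_bq: assumes "p \<in> MM" shows "Dv (axis i 1) bq p = (if i = 3 then b1q p else 0)"
  unfolding bq_def b1q_def by (rule Dv_p3[OF b_deriv[OF MM_V[OF assms]]])
lemma Dv_b1q: assumes "p \<in> MM" shows "Dv (axis i 1) b1q p = (if i = 3 then deriv (deriv \<beta>) (p$3) else 0)"
  unfolding b1q_def by (rule Dv_p3[OF b1_deriv[OF MM_V[OF assms]]])

lemma dLq: assumes "p \<in> MM" shows "Lq differentiable (at p)"
  unfolding Lq_def using diff_xy[OF l2d[OF MM_U[OF assms]]] .
lemma dNq: assumes "p \<in> MM" shows "Nq differentiable (at p)"
  unfolding Nq_def using diff_xy[OF n2d[OF MM_U[OF assms]]] .
lemma dHq: assumes "p \<in> MM" shows "Hq differentiable (at p)"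
  unfolding Hq_def using diff_xy[OF hd[OF MM_U[OF assms]]] .
lemma dL1: assumes "p \<in> MM" shows "L1 differentiable (at p)"
  unfolding L1_def using diff_xy[OF l2d1[OF MM_U[OF assms]]] .
lemma dL2: assumes "p \<in> MM" shows "L2 differentiable (at p)"
  unfolding L2_def using diff_xy[OF l2d2[OF MM_U[OF assms]]] .
lemma dN1: assumes "p \<in> MM" shows "N1 differentiable (at p)"
  unfolding N1_def using diff_xy[OF n2d1[OF MM_U[OF assms]]] .
lemma dN2: assumes "p \<in> MM" shows "N2 differentiable (at p)"
  unfolding N2_def using diff_xy[OF n2d2[OF MM_U[OF assms]]] .
lemma dH1: assumes "p \<in> MM" shows "H1 differentiable (at p)"
  unfolding H1_def using diff_xy[OF hd1[OF MM_U[OF assms]]] .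
lemma dH2: assumes "p \<in> MM" shows "H2 differentiable (at p)"
  unfolding H2_def using diff_xy[OF hd2[OF MM_U[OF assms]]] .
lemma dEq: assumes "p \<in> MM" shows "Eq differentiable (at p)"
  unfolding Eq_def using diff_p3[OF E_der[OF MM_V[OF assms]]] .
lemma daq: assumes "p \<in> MM" shows "aq differentiable (at p)"
  unfolding aq_def using diff_p3[OF a_deriv[OF MM_V[OF assms]]] .
lemma dbq: assumes "p \<in> MM" shows "bq differentiable (at p)"
  unfolding bq_def using diff_p3[OF b_deriv[OF MM_V[OF assms]]] .
lemma db1q: assumes "p \<in> MM" shows "b1q differentiable (at p)"
  unfolding b1q_def using diff_p3[OF b1_deriv[OF MM_V[OF assms]]] .

lemma Hq_pos: "p \<in> MM \<Longrightarrow> Hq p > 0" unfolding Hq_def using hpos MM_U by blast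
lemma Hq_nz: "p \<in> MM \<Longrightarrow> Hq p \<noteq> 0" using Hq_pos by force
lemma bq_nz: "p \<in> MM \<Longrightarrow> bq p \<noteq> 0" unfolding bq_def using bnz MM_V by blast
lemma aq_nz: "p \<in> MM \<Longrightarrow> aq p \<noteq> 0" unfolding aq_def using anz MM_V by blast
lemma Eq_nz: "Eq p \<noteq> 0" unfolding Eq_def by simp
lemma Eq_pos: "Eq p > 0" unfolding Eq_def by simp

lemma N1_rel: "p \<in> MM \<Longrightarrow> N1 p = L2 p + (Hq p)^2"
  unfolding N1_def L2_def Hq_def Dv_def using rel MM_U by force

lemma bae: "p \<in> MM \<Longrightarrow> bq p * aq p * Eq p = 1"
  unfolding bq_def aq_def Eq_def using ba MM_V by (simp add: exp_minus field_simps)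

lemma bad: "p \<in> MM \<Longrightarrow> b1q p * aq p + bq p * deriv \<alpha> (p$3) = aq p * (bq p * aq p)"
  unfolding bq_def aq_def b1q_def using ba_deriv MM_V by blast

lemmas atom_simps = Dv_Lq Dv_Nq Dv_Hq Dv_L1 Dv_L2 Dv_N1 Dv_N2 Dv_H1 Dv_H2 Dv_Eq Dv_aq Dv_bq Dv_b1q
  dLq dNq dHq dL1 dL2 dN1 dN2 dH1 dH2 dEq daq dbq db1q Hq_nz bq_nz aq_nz Eq_nz

lemma gg_eq: "gg q i j = Eq q * (Hq q)^2 * (dx q i * dx q j + dy q i * dy q j)
   + (dt q i - Lq q * dx q i - Nq q * dy q i) / bq q * ((dt q j - Lq q * dx q j - Nq q * dy q j) / bq q)
   + dz q i * dz q j"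
  unfolding gg_def gmet_def theta3_def theta4_def Eq_def Hq_def Lq_def Nq_def bq_def by simp


lemma gg_simps: "dx q 1 = 1" "dx q 2 = 0" "dx q 3 = 0" "dx q 4 = 0"
  "dy q 1 = 0" "dy q 2 = 1" "dy q 3 = 0" "dy q 4 = 0"
  "dz q 1 = 0" "dz q 2 = 0" "dz q 3 = 1" "dz q 4 = 0"
  "dt q 1 = 0" "dt q 2 = 0" "dt q 3 = 0" "dt q 4 = 1"
  by (simp_all add: dx_def dy_def dz_def dt_def)

definition "gi k l q = (let EH = Eq q * (Hq q)^2 in
   if k = 1 \<and> l = 1 then 1 / EH else
   if (k = 1 \<and> l = 4) \<or> (k = 4 \<and> l = 1) then Lq q / EH else
   if k = 2 \<and> l = 2 then 1 / EH else
   if (k = 2 \<and> l = 4) \<or> (k = 4 \<and> l = 2) then Nq q / EH else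
   if k = 3 \<and> l = 3 then 1 else
   if k = 4 \<and> l = 4 then ((Lq q)^2 + (Nq q)^2) / EH + (bq q)^2 else 0)"

lemma matrix_inv_eq:
  fixes X Y :: "real^'n^'n"
  assumes "X ** Y = mat 1" "Y ** X = mat 1"
  shows "matrix_inv X = Y"
proof -
  have ex: "\<exists>Y'. X ** Y' = mat 1 \<and> Y' ** X = mat 1" using assms by blast
  have s: "X ** matrix_inv X = mat 1 \<and> matrix_inv X ** X = mat 1"
    unfolding matrix_inv_def by (rule someI_ex[OF ex])
  have "matrix_inv X = matrix_inv X ** (X ** Y)" using assms by (simp add: matrix_mul_rid)
  also have "\<dots> = (matrix_inv X ** X) ** Y" by (simp add: matrix_mul_assoc)
  also have "\<dots> = Y" using s by (simp add: matrix_mul_lid)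
  finally show ?thesis .
qed

lemma inv_metric_eq: assumes q: "q \<in> MM" shows "inv_metric gg q k l = gi k l q"
proof -
  have E: "Eq q \<noteq> 0" and H: "Hq q \<noteq> 0" and b: "bq q \<noteq> 0" using q by (simp_all add: atom_simps)
  have 1: "metric_matrix gg q ** (\<chi> k l. gi k l q) = mat 1"
    unfolding metric_matrix_def matrix_matrix_mult_def mat_def
    by (simp add: vec_eq_iff forall_4 sum_4 gg_eq gg_simps gi_def Let_def) (use E H b in \<open>simp add: field_simps power2_eq_square\<close>)
  have 2: "(\<chi> k l. gi k l q) ** metric_matrix gg q = mat 1"
    unfolding metric_matrix_def matrix_matrix_mult_def mat_def
    by (simp add: vec_eq_iff forall_4 sum_4 gg_eq gg_simps gi_def Let_def) (use E H b in \<open>simp add: field_simps power2_eq_square\<close>)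
  show ?thesis unfolding inv_metric_def using matrix_inv_eq[OF 1 2] by simp
qed

definition Gc :: "4 \<Rightarrow> 4 \<Rightarrow> 4 \<Rightarrow> real^4 \<Rightarrow> real" where
  "Gc k i j = (
   if k = 1 \<and> i = 1 \<and> j = 1 then (\<lambda>q. (1) * (H1 q) / ((Hq q)))
   else if k = 1 \<and> i = 1 \<and> j = 2 then (\<lambda>q. (-1/2) * (Lq q) / ((Eq q) * (bq q) ^ 2) + (1) * (H2 q) / ((Hq q)))
   else if k = 1 \<and> i = 1 \<and> j = 3 then (\<lambda>q. (-1/2) * (aq q))
   else if k = 1 \<and> i = 2 \<and> j = 1 then (\<lambda>q. (-1/2) * (Lq q) / ((Eq q) * (bq q) ^ 2) + (1) * (H2 q) / ((Hq q)))
   else if k = 1 \<and> i = 2 \<and> j = 2 then (\<lambda>q. (-1) * (Nq q) / ((Eq q) * (bq q) ^ 2) + (-1) * (H1 q) / ((Hq q)))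
   else if k = 1 \<and> i = 2 \<and> j = 4 then (\<lambda>q. (1/2) / ((Eq q) * (bq q) ^ 2))
   else if k = 1 \<and> i = 3 \<and> j = 1 then (\<lambda>q. (-1/2) * (aq q))
   else if k = 1 \<and> i = 4 \<and> j = 2 then (\<lambda>q. (1/2) / ((Eq q) * (bq q) ^ 2))
   else if k = 2 \<and> i = 1 \<and> j = 1 then (\<lambda>q. (1) * (Lq q) / ((Eq q) * (bq q) ^ 2) + (-1) * (H2 q) / ((Hq q)))
   else if k = 2 \<and> i = 1 \<and> j = 2 then (\<lambda>q. (1/2) * (Nq q) / ((Eq q) * (bq q) ^ 2) + (1) * (H1 q) / ((Hq q)))
   else if k = 2 \<and> i = 1 \<and> j = 4 then (\<lambda>q. (-1/2) / ((Eq q) * (bq q) ^ 2))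
   else if k = 2 \<and> i = 2 \<and> j = 1 then (\<lambda>q. (1/2) * (Nq q) / ((Eq q) * (bq q) ^ 2) + (1) * (H1 q) / ((Hq q)))
   else if k = 2 \<and> i = 2 \<and> j = 2 then (\<lambda>q. (1) * (H2 q) / ((Hq q)))
   else if k = 2 \<and> i = 2 \<and> j = 3 then (\<lambda>q. (-1/2) * (aq q))
   else if k = 2 \<and> i = 3 \<and> j = 2 then (\<lambda>q. (-1/2) * (aq q))
   else if k = 2 \<and> i = 4 \<and> j = 1 then (\<lambda>q. (-1/2) / ((Eq q) * (bq q) ^ 2))
   else if k = 3 \<and> i = 1 \<and> j = 1 then (\<lambda>q. (1/2) * (Eq q) * (Hq q) ^ 2 * (aq q) + (1) * (Lq q) ^ 2 * (b1q q) / ((bq q) ^ 3))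
   else if k = 3 \<and> i = 1 \<and> j = 2 then (\<lambda>q. (1) * (Lq q) * (Nq q) * (b1q q) / ((bq q) ^ 3))
   else if k = 3 \<and> i = 1 \<and> j = 4 then (\<lambda>q. (-1) * (Lq q) * (b1q q) / ((bq q) ^ 3))
   else if k = 3 \<and> i = 2 \<and> j = 1 then (\<lambda>q. (1) * (Lq q) * (Nq q) * (b1q q) / ((bq q) ^ 3))
   else if k = 3 \<and> i = 2 \<and> j = 2 then (\<lambda>q. (1/2) * (Eq q) * (Hq q) ^ 2 * (aq q) + (1) * (Nq q) ^ 2 * (b1q q) / ((bq q) ^ 3))
   else if k = 3 \<and> i = 2 \<and> j = 4 then (\<lambda>q. (-1) * (Nq q) * (b1q q) / ((bq q) ^ 3))
   else if k = 3 \<and> i = 4 \<and> j = 1 then (\<lambda>q. (-1) * (Lq q) * (b1q q) / ((bq q) ^ 3))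
   else if k = 3 \<and> i = 4 \<and> j = 2 then (\<lambda>q. (-1) * (Nq q) * (b1q q) / ((bq q) ^ 3))
   else if k = 3 \<and> i = 4 \<and> j = 4 then (\<lambda>q. (1) * (b1q q) / ((bq q) ^ 3))
   else if k = 4 \<and> i = 1 \<and> j = 1 then (\<lambda>q. (1) * (Lq q) * (Nq q) / ((Eq q) * (bq q) ^ 2) + (1) * (H1 q) * (Lq q) / ((Hq q)) + (-1) * (H2 q) * (Nq q) / ((Hq q)) + (-1) * (L1 q))
   else if k = 4 \<and> i = 1 \<and> j = 2 then (\<lambda>q. (-1/2) * (Lq q) ^ 2 / ((Eq q) * (bq q) ^ 2) + (1/2) * (Nq q) ^ 2 / ((Eq q) * (bq q) ^ 2) + (1) * (H1 q) * (Nq q) / ((Hq q)) + (1) * (H2 q) * (Lq q) / ((Hq q)) + (-1/2) * (Hq q) ^ 2 + (-1) * (L2 q))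
   else if k = 4 \<and> i = 1 \<and> j = 3 then (\<lambda>q. (-1/2) * (Lq q) * (aq q) + (1) * (Lq q) * (b1q q) / ((bq q)))
   else if k = 4 \<and> i = 1 \<and> j = 4 then (\<lambda>q. (-1/2) * (Nq q) / ((Eq q) * (bq q) ^ 2))
   else if k = 4 \<and> i = 2 \<and> j = 1 then (\<lambda>q. (-1/2) * (Lq q) ^ 2 / ((Eq q) * (bq q) ^ 2) + (1/2) * (Nq q) ^ 2 / ((Eq q) * (bq q) ^ 2) + (1) * (H1 q) * (Nq q) / ((Hq q)) + (1) * (H2 q) * (Lq q) / ((Hq q)) + (-1/2) * (Hq q) ^ 2 + (-1) * (L2 q))
   else if k = 4 \<and> i = 2 \<and> j = 2 then (\<lambda>q. (-1) * (Lq q) * (Nq q) / ((Eq q) * (bq q) ^ 2) + (-1) * (H1 q) * (Lq q) / ((Hq q)) + (1) * (H2 q) * (Nq q) / ((Hq q)) + (-1) * (N2 q))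
   else if k = 4 \<and> i = 2 \<and> j = 3 then (\<lambda>q. (-1/2) * (Nq q) * (aq q) + (1) * (Nq q) * (b1q q) / ((bq q)))
   else if k = 4 \<and> i = 2 \<and> j = 4 then (\<lambda>q. (1/2) * (Lq q) / ((Eq q) * (bq q) ^ 2))
   else if k = 4 \<and> i = 3 \<and> j = 1 then (\<lambda>q. (-1/2) * (Lq q) * (aq q) + (1) * (Lq q) * (b1q q) / ((bq q)))
   else if k = 4 \<and> i = 3 \<and> j = 2 then (\<lambda>q. (-1/2) * (Nq q) * (aq q) + (1) * (Nq q) * (b1q q) / ((bq q)))
   else if k = 4 \<and> i = 3 \<and> j = 4 then (\<lambda>q. (-1) * (b1q q) / ((bq q)))
   else if k = 4 \<and> i = 4 \<and> j = 1 then (\<lambda>q. (-1/2) * (Nq q) / ((Eq q) * (bq q) ^ 2))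
   else if k = 4 \<and> i = 4 \<and> j = 2 then (\<lambda>q. (1/2) * (Lq q) / ((Eq q) * (bq q) ^ 2))
   else if k = 4 \<and> i = 4 \<and> j = 3 then (\<lambda>q. (-1) * (b1q q) / ((bq q)))
   else (\<lambda>q. 0))"


lemma Gamma_Gc: assumes q: "q \<in> MM" shows "Gamma gg q k i j = Gc k i j q"
proof -
  have "k = 1 \<or> k = 2 \<or> k = 3 \<or> k = 4" "i = 1 \<or> i = 2 \<or> i = 3 \<or> i = 4" "j = 1 \<or> j = 2 \<or> j = 3 \<or> j = 4"
    using exhaust_4 by blast+
  then show ?thesis
    unfolding Gamma_def pd_Dv
    apply (elim disjE)
    apply (simp_all add: sum_4 inv_metric_eq[OF q] gi_def Let_def gg_eq gg_simps atom_simps q Gc_def N1_rel)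
    apply (insert q)
    apply (simp_all add: atom_simps field_simps power2_eq_square power3_eq_cube)
    done
qed

definition Rc :: "4 \<Rightarrow> 4 \<Rightarrow> real^4 \<Rightarrow> real" where
  "Rc i j p = (
   if i = 1 \<and> j = 1 then (-1/2) * (Hq p) ^ 2 / ((Eq p) * (bq p) ^ 2) + (1/2) * (Lq p) ^ 2 / ((Eq p) ^ 2 * (bq p) ^ 4) + (-1/2) * (Eq p) * (Hq p) ^ 2 * (aq p) * (b1q p) / ((bq p)) + (-1/2) * (Eq p) * (Hq p) ^ 2 * (aq p) ^ 2 + (1/2) * (Eq p) * (Hq p) ^ 2 * (deriv \<alpha> (p$3)) + (-1) * (Dv e1 (Dv e1 h) (xy p)) / ((Hq p)) + (-1) * (Dv e2 (Dv e2 h) (xy p)) / ((Hq p)) + (1) * (H1 p) ^ 2 / ((Hq p) ^ 2) + (1) * (H2 p) ^ 2 / ((Hq p) ^ 2) + (-1) * (Lq p) ^ 2 * (aq p) * (b1q p) / ((bq p) ^ 3) + (1) * (Lq p) ^ 2 * (deriv (deriv \<beta>) (p$3)) / ((bq p) ^ 3) + (-2) * (Lq p) ^ 2 * (b1q p) ^ 2 / ((bq p) ^ 4)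
   else if i = 1 \<and> j = 2 then (1/2) * (Lq p) * (Nq p) / ((Eq p) ^ 2 * (bq p) ^ 4) + (-1) * (Dv e2 (Dv e1 h) (xy p)) / ((Hq p)) + (1) * (Dv e1 (Dv e2 h) (xy p)) / ((Hq p)) + (-1) * (Lq p) * (Nq p) * (aq p) * (b1q p) / ((bq p) ^ 3) + (1) * (Lq p) * (Nq p) * (deriv (deriv \<beta>) (p$3)) / ((bq p) ^ 3) + (-2) * (Lq p) * (Nq p) * (b1q p) ^ 2 / ((bq p) ^ 4)
   else if i = 1 \<and> j = 4 then (-1/2) * (Lq p) / ((Eq p) ^ 2 * (bq p) ^ 4) + (1) * (Lq p) * (aq p) * (b1q p) / ((bq p) ^ 3) + (-1) * (Lq p) * (deriv (deriv \<beta>) (p$3)) / ((bq p) ^ 3) + (2) * (Lq p) * (b1q p) ^ 2 / ((bq p) ^ 4)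
   else if i = 2 \<and> j = 1 then (1/2) * (Lq p) * (Nq p) / ((Eq p) ^ 2 * (bq p) ^ 4) + (1) * (Dv e2 (Dv e1 h) (xy p)) / ((Hq p)) + (-1) * (Dv e1 (Dv e2 h) (xy p)) / ((Hq p)) + (-1) * (Lq p) * (Nq p) * (aq p) * (b1q p) / ((bq p) ^ 3) + (1) * (Lq p) * (Nq p) * (deriv (deriv \<beta>) (p$3)) / ((bq p) ^ 3) + (-2) * (Lq p) * (Nq p) * (b1q p) ^ 2 / ((bq p) ^ 4)
   else if i = 2 \<and> j = 2 then (-1/2) * (Hq p) ^ 2 / ((Eq p) * (bq p) ^ 2) + (1/2) * (Nq p) ^ 2 / ((Eq p) ^ 2 * (bq p) ^ 4) + (-1/2) * (Eq p) * (Hq p) ^ 2 * (aq p) * (b1q p) / ((bq p)) + (-1/2) * (Eq p) * (Hq p) ^ 2 * (aq p) ^ 2 + (1/2) * (Eq p) * (Hq p) ^ 2 * (deriv \<alpha> (p$3)) + (-1) * (Dv e1 (Dv e1 h) (xy p)) / ((Hq p)) + (-1) * (Dv e2 (Dv e2 h) (xy p)) / ((Hq p)) + (1) * (H1 p) ^ 2 / ((Hq p) ^ 2) + (1) * (H2 p) ^ 2 / ((Hq p) ^ 2) + (-1) * (Nq p) ^ 2 * (aq p) * (b1q p) / ((bq p) ^ 3) + (1) * (Nq p) ^ 2 * (deriv (deriv \<beta>) (p$3)) / ((bq p) ^ 3) + (-2) * (Nq p) ^ 2 * (b1q p) ^ 2 / ((bq p) ^ 4)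
   else if i = 2 \<and> j = 4 then (-1/2) * (Nq p) / ((Eq p) ^ 2 * (bq p) ^ 4) + (1) * (Nq p) * (aq p) * (b1q p) / ((bq p) ^ 3) + (-1) * (Nq p) * (deriv (deriv \<beta>) (p$3)) / ((bq p) ^ 3) + (2) * (Nq p) * (b1q p) ^ 2 / ((bq p) ^ 4)
   else if i = 3 \<and> j = 3 then (-1/2) * (aq p) ^ 2 + (1) * (deriv \<alpha> (p$3)) + (1) * (deriv (deriv \<beta>) (p$3)) / ((bq p)) + (-2) * (b1q p) ^ 2 / ((bq p) ^ 2)
   else if i = 4 \<and> j = 1 then (-1/2) * (Lq p) / ((Eq p) ^ 2 * (bq p) ^ 4) + (1) * (Lq p) * (aq p) * (b1q p) / ((bq p) ^ 3) + (-1) * (Lq p) * (deriv (deriv \<beta>) (p$3)) / ((bq p) ^ 3) + (2) * (Lq p) * (b1q p) ^ 2 / ((bq p) ^ 4)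
   else if i = 4 \<and> j = 2 then (-1/2) * (Nq p) / ((Eq p) ^ 2 * (bq p) ^ 4) + (1) * (Nq p) * (aq p) * (b1q p) / ((bq p) ^ 3) + (-1) * (Nq p) * (deriv (deriv \<beta>) (p$3)) / ((bq p) ^ 3) + (2) * (Nq p) * (b1q p) ^ 2 / ((bq p) ^ 4)
   else if i = 4 \<and> j = 4 then (1/2) / ((Eq p) ^ 2 * (bq p) ^ 4) + (-1) * (aq p) * (b1q p) / ((bq p) ^ 3) + (1) * (deriv (deriv \<beta>) (p$3)) / ((bq p) ^ 3) + (-2) * (b1q p) ^ 2 / ((bq p) ^ 4)
   else 0)"


lemma DvGamma: assumes p: "p \<in> MM" shows "Dv c (\<lambda>q. Gamma gg q k i j) p = Dv c (Gc k i j) p"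
  using Dv_local[OF open_MM p, of "\<lambda>q. Gamma gg q k i j" "Gc k i j"] Gamma_Gc by blast

lemma inv_facts: assumes p: "p \<in> MM" shows "Hq p * inverse (Hq p) = 1" "Eq p * inverse (Eq p) = 1" "bq p * inverse (bq p) = 1"
  using p by (simp_all add: atom_simps)

lemma R_1_1: assumes p: "p \<in> MM" shows "Ricci gg p 1 1 = Rc 1 1 p"
  unfolding Ricci_def pd_Dv
  by (simp add: sum_4 DvGamma[OF p] Gamma_Gc[OF p];
      (simp add: Gc_def atom_simps p N1_rel Rc_def)?;
      (simp add: Hq_nz[OF p] bq_nz[OF p] aq_nz[OF p] Eq_nz field_simps)?;
      (algebra)?)

lemma R_1_2: assumes p: "p \<in> MM" shows "Ricci gg p 1 2 = Rc 1 2 p"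
  unfolding Ricci_def pd_Dv
  by (simp add: sum_4 DvGamma[OF p] Gamma_Gc[OF p];
      (simp add: Gc_def atom_simps p N1_rel Rc_def)?;
      (simp add: Hq_nz[OF p] bq_nz[OF p] aq_nz[OF p] Eq_nz field_simps)?;
      (algebra)?)

lemma R_1_3: assumes p: "p \<in> MM" shows "Ricci gg p 1 3 = Rc 1 3 p"
  unfolding Ricci_def pd_Dv
  by (simp add: sum_4 DvGamma[OF p] Gamma_Gc[OF p];
      (simp add: Gc_def atom_simps p N1_rel Rc_def)?;
      (simp add: Hq_nz[OF p] bq_nz[OF p] aq_nz[OF p] Eq_nz field_simps)?;
      (algebra)?)

lemma R_1_4: assumes p: "p \<in> MM" shows "Ricci gg p 1 4 = Rc 1 4 p"
  unfolding Ricci_def pd_Dv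
  by (simp add: sum_4 DvGamma[OF p] Gamma_Gc[OF p];
      (simp add: Gc_def atom_simps p N1_rel Rc_def)?;
      (simp add: Hq_nz[OF p] bq_nz[OF p] aq_nz[OF p] Eq_nz field_simps)?;
      (algebra)?)

lemma R_2_1: assumes p: "p \<in> MM" shows "Ricci gg p 2 1 = Rc 2 1 p"
  unfolding Ricci_def pd_Dv
  by (simp add: sum_4 DvGamma[OF p] Gamma_Gc[OF p];
      (simp add: Gc_def atom_simps p N1_rel Rc_def)?;
      (simp add: Hq_nz[OF p] bq_nz[OF p] aq_nz[OF p] Eq_nz field_simps)?;
      (algebra)?)

lemma R_2_2: assumes p: "p \<in> MM" shows "Ricci gg p 2 2 = Rc 2 2 p"
  unfolding Ricci_def pd_Dv
  by (simp add: sum_4 DvGamma[OF p] Gamma_Gc[OF p];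
      (simp add: Gc_def atom_simps p N1_rel Rc_def)?;
      (simp add: Hq_nz[OF p] bq_nz[OF p] aq_nz[OF p] Eq_nz field_simps)?;
      (algebra)?)

lemma R_2_3: assumes p: "p \<in> MM" shows "Ricci gg p 2 3 = Rc 2 3 p"
  unfolding Ricci_def pd_Dv
  by (simp add: sum_4 DvGamma[OF p] Gamma_Gc[OF p];
      (simp add: Gc_def atom_simps p N1_rel Rc_def)?;
      (simp add: Hq_nz[OF p] bq_nz[OF p] aq_nz[OF p] Eq_nz field_simps)?;
      (algebra)?)

lemma R_2_4: assumes p: "p \<in> MM" shows "Ricci gg p 2 4 = Rc 2 4 p"
  unfolding Ricci_def pd_Dv
  by (simp add: sum_4 DvGamma[OF p] Gamma_Gc[OF p];
      (simp add: Gc_def atom_simps p N1_rel Rc_def)?;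
      (simp add: Hq_nz[OF p] bq_nz[OF p] aq_nz[OF p] Eq_nz field_simps)?;
      (algebra)?)

lemma R_3_1: assumes p: "p \<in> MM" shows "Ricci gg p 3 1 = Rc 3 1 p"
  unfolding Ricci_def pd_Dv
  by (simp add: sum_4 DvGamma[OF p] Gamma_Gc[OF p];
      (simp add: Gc_def atom_simps p N1_rel Rc_def)?;
      (simp add: Hq_nz[OF p] bq_nz[OF p] aq_nz[OF p] Eq_nz field_simps)?;
      (algebra)?)

lemma R_3_2: assumes p: "p \<in> MM" shows "Ricci gg p 3 2 = Rc 3 2 p"
  unfolding Ricci_def pd_Dv
  by (simp add: sum_4 DvGamma[OF p] Gamma_Gc[OF p];
      (simp add: Gc_def atom_simps p N1_rel Rc_def)?;
      (simp add: Hq_nz[OF p] bq_nz[OF p] aq_nz[OF p] Eq_nz field_simps)?;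
      (algebra)?)

lemma R_3_3: assumes p: "p \<in> MM" shows "Ricci gg p 3 3 = Rc 3 3 p"
  unfolding Ricci_def pd_Dv
  by (simp add: sum_4 DvGamma[OF p] Gamma_Gc[OF p];
      (simp add: Gc_def atom_simps p N1_rel Rc_def)?;
      (simp add: Hq_nz[OF p] bq_nz[OF p] aq_nz[OF p] Eq_nz field_simps)?;
      (algebra)?)

lemma R_3_4: assumes p: "p \<in> MM" shows "Ricci gg p 3 4 = Rc 3 4 p"
  unfolding Ricci_def pd_Dv
  by (simp add: sum_4 DvGamma[OF p] Gamma_Gc[OF p];
      (simp add: Gc_def atom_simps p N1_rel Rc_def)?;
      (simp add: Hq_nz[OF p] bq_nz[OF p] aq_nz[OF p] Eq_nz field_simps)?;
      (algebra)?)

lemma R_4_1: assumes p: "p \<in> MM" shows "Ricci gg p 4 1 = Rc 4 1 p"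
  unfolding Ricci_def pd_Dv
  by (simp add: sum_4 DvGamma[OF p] Gamma_Gc[OF p];
      (simp add: Gc_def atom_simps p N1_rel Rc_def)?;
      (simp add: Hq_nz[OF p] bq_nz[OF p] aq_nz[OF p] Eq_nz field_simps)?;
      (algebra)?)

lemma R_4_2: assumes p: "p \<in> MM" shows "Ricci gg p 4 2 = Rc 4 2 p"
  unfolding Ricci_def pd_Dv
  by (simp add: sum_4 DvGamma[OF p] Gamma_Gc[OF p];
      (simp add: Gc_def atom_simps p N1_rel Rc_def)?;
      (simp add: Hq_nz[OF p] bq_nz[OF p] aq_nz[OF p] Eq_nz field_simps)?;
      (algebra)?)

lemma R_4_3: assumes p: "p \<in> MM" shows "Ricci gg p 4 3 = Rc 4 3 p"
  unfolding Ricci_def pd_Dv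
  by (simp add: sum_4 DvGamma[OF p] Gamma_Gc[OF p];
      (simp add: Gc_def atom_simps p N1_rel Rc_def)?;
      (simp add: Hq_nz[OF p] bq_nz[OF p] aq_nz[OF p] Eq_nz field_simps)?;
      (algebra)?)

lemma R_4_4: assumes p: "p \<in> MM" shows "Ricci gg p 4 4 = Rc 4 4 p"
  unfolding Ricci_def pd_Dv
  by (simp add: sum_4 DvGamma[OF p] Gamma_Gc[OF p];
      (simp add: Gc_def atom_simps p N1_rel Rc_def)?;
      (simp add: Hq_nz[OF p] bq_nz[OF p] aq_nz[OF p] Eq_nz field_simps)?;
      (algebra)?)

lemma Ricci_Rc: assumes p: "p \<in> MM" shows "Ricci gg p i j = Rc i j p"
proof -
  have "i = 1 \<or> i = 2 \<or> i = 3 \<or> i = 4" "j = 1 \<or> j = 2 \<or> j = 3 \<or> j = 4"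
    using exhaust_4 by blast+
  thus ?thesis using R_1_1[OF p] R_1_2[OF p] R_1_3[OF p] R_1_4[OF p] R_2_1[OF p] R_2_2[OF p] R_2_3[OF p] R_2_4[OF p]
    R_3_1[OF p] R_3_2[OF p] R_3_3[OF p] R_3_4[OF p] R_4_1[OF p] R_4_2[OF p] R_4_3[OF p] R_4_4[OF p]
    by (elim disjE) simp_all
qed


subsection \<open>The complex structures\<close>

definition "J0 (i::4) (j::4) = (if i = 2 \<and> j = 1 then 1 else if i = 1 \<and> j = 2 then -1 else (0::real))"
definition "JN (i::4) (j::4) = (if i = 4 \<and> j = 1 then 1 else (0::real))"
definition "JL (i::4) (j::4) = (if i = 4 \<and> j = 2 then -1 else (0::real))"
definition "JLb (i::4) (j::4) = (if i = 3 \<and> j = 1 then -1 else (0::real))"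
definition "JNb (i::4) (j::4) = (if i = 3 \<and> j = 2 then -1 else (0::real))"
definition "Jb (i::4) (j::4) = (if i = 4 \<and> j = 3 then -1 else (0::real))"
definition "Jib (i::4) (j::4) = (if i = 3 \<and> j = 4 then 1 else (0::real))"

definition "Jm s q i j = J0 i j + JL i j * Lq q + JN i j * Nq q
   + s * (Jb i j * bq q + Jib i j * (1 / bq q) + JLb i j * (Lq q / bq q) + JNb i j * (Nq q / bq q))"

lemmas Jc_defs = J0_def JN_def JL_def JLb_def JNb_def Jb_def Jib_def

definition "Om s q i j = Eq q * (Hq q)^2 * (dx q i * dy q j - dx q j * dy q i)
   + s * ((dt q i - Lq q * dx q i - Nq q * dy q i) / bq q * dz q j - (dt q j - Lq q * dx q j - Nq q * dy q j) / bq q * dz q i)"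

lemma ssx: "s * s = (1::real) \<Longrightarrow> s * (s * x) = x" by (metis mult.assoc mult_1)

lemma split3: "(k::4) = 1 \<or> k = 2 \<or> k = 3 \<or> k = 4" using exhaust_4 by blast

lemma J_sq: assumes p: "p \<in> MM" and s: "s * s = 1"
  shows "(\<Sum>k\<in>UNIV. Jm s p i k * Jm s p k j) = (if i = j then -1 else 0)"
  using split3[of i] split3[of j]
  by (elim disjE; simp add: sum_4 Jm_def Jc_defs; (simp add: bq_nz[OF p] field_simps s ssx[OF s])?)

lemma J_orth: assumes p: "p \<in> MM" and s: "s * s = 1"
  shows "(\<Sum>k\<in>UNIV. \<Sum>l\<in>UNIV. Jm s p k i * Jm s p l j * gg p k l) = gg p i j"
  using split3[of i] split3[of j]
  by (elim disjE; simp add: sum_4 Jm_def Jc_defs gg_eq gg_simps; (simp add: bq_nz[OF p] field_simps s power2_eq_square ssx[OF s])?)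

lemma J_kf: assumes p: "p \<in> MM" and s: "s * s = 1"
  shows "kahler_form gg (Jm s) p i j = Om s p i j"
  unfolding kahler_form_def using split3[of i] split3[of j]
  by (elim disjE; simp add: sum_4 Jm_def Jc_defs gg_eq gg_simps Om_def; (simp add: bq_nz[OF p] field_simps s power2_eq_square ssx[OF s])?)

lemma J_nij: assumes p: "p \<in> MM" and s: "s * s = 1"
  shows "nijenhuis (Jm s) p i j k = 0"
  unfolding nijenhuis_def pd_Dv using split3[of i] split3[of j] split3[of k]
  by (elim disjE; simp add: sum_4 Jm_def Jc_defs atom_simps p; (simp add: bq_nz[OF p] field_simps s power2_eq_square ssx[OF s])?)




lemma Om1_eq: "omegaSigmaA h A q i j + wedge11 (theta3 \<beta> l2 n2) theta4 q i j = Om 1 q i j"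
  unfolding omegaSigmaA_def wedge11_def theta3_def theta4_def Om_def Eq_def Hq_def Lq_def Nq_def bq_def
  by (simp add: divide_inverse algebra_simps)

lemma Om2_eq: "omegaSigmaA h A q i j + wedge11 theta4 (theta3 \<beta> l2 n2) q i j = Om (-1) q i j"
  unfolding omegaSigmaA_def wedge11_def theta3_def theta4_def Om_def Eq_def Hq_def Lq_def Nq_def bq_def
  by (simp add: divide_inverse algebra_simps)

lemma Eq_sol: "p \<in> MM \<Longrightarrow> Eq p = 1 / (bq p * aq p)"
  using bae[of p] aq_nz[of p] bq_nz[of p] by (simp add: eq_divide_eq mult.commute mult.left_commute)

lemma a1_sol: "p \<in> MM \<Longrightarrow> deriv \<alpha> (p$3) = (aq p * (bq p * aq p) - b1q p * aq p) / bq p"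
  using bad[of p] bq_nz[of p] by (simp add: eq_divide_eq algebra_simps)

lemma DvKF: assumes p: "p \<in> MM" and s: "s * s = 1"
  shows "Dv c (\<lambda>q. kahler_form gg (Jm s) q a b) p = Dv c (\<lambda>q. Om s q a b) p"
  using Dv_local[OF open_MM p, of "\<lambda>q. kahler_form gg (Jm s) q a b" "\<lambda>q. Om s q a b"] J_kf[OF _ s] by blast

lemma closed_bar: assumes p: "p \<in> MM"
  shows "ext_d2 (kahler_form gg (Jm (-1))) p i j k = 0"
proof -
  have s: "(-1::real) * -1 = 1" by simp
  show ?thesis
  unfolding ext_d2_def pd_Dv DvKF[OF p s] using split3[of i] split3[of j] split3[of k]
  by (elim disjE; simp add: Om_def gg_simps atom_simps p; (simp add: N1_rel[OF p] Eq_sol[OF p] aq_nz[OF p] bq_nz[OF p] field_simps)?)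
qed


lemma lee: assumes p: "p \<in> MM"
  shows "ext_d2 (kahler_form gg (Jm 1)) p i j k = 2 * wedge12 (\<lambda>p i. - \<alpha> (p$3) * theta4 p i) (kahler_form gg (Jm 1)) p i j k"
proof -
  have s: "(1::real) * 1 = 1" by simp
  show ?thesis
  unfolding ext_d2_def wedge12_def pd_Dv DvKF[OF p s] J_kf[OF p s] theta4_def aq_def[symmetric]
  using split3[of i] split3[of j] split3[of k]
  by (elim disjE; simp add: Om_def gg_simps atom_simps p; (simp add: N1_rel[OF p] Eq_sol[OF p] aq_nz[OF p] bq_nz[OF p] field_simps)?)
qed


lemma ext_d2_mult: assumes dphi: "phi differentiable (at p)" and dw: "\<And>a b. (\<lambda>q. w q a b) differentiable (at p)"
  shows "ext_d2 (\<lambda>r a b. phi r * w r a b) p i j k = phi p * ext_d2 w p i j k + wedge12 (\<lambda>p i. pd i phi p) w p i j k"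
  unfolding ext_d2_def wedge12_def pd_Dv using Dv_mult[OF dphi dw] by (simp add: algebra_simps)

lemma e2A_der: "z \<in> V \<Longrightarrow> ((\<lambda>z. exp (2 * A z)) has_real_derivative (2 * \<alpha> z * exp (2 * A z))) (at z)"
  using dA by (auto intro!: derivative_eq_intros)

lemma lck_closed: assumes p: "p \<in> MM"
  shows "ext_d2 (\<lambda>r a b. exp (2 * A (r$3)) * kahler_form gg (Jm 1) r a b) p i j k = 0"
proof -
  have s: "(1::real) * 1 = 1" by simp
  have dphi: "(\<lambda>r::real^4. exp (2 * A (r$3))) differentiable (at p)"
    using diff_p3[OF e2A_der[OF MM_V[OF p]]] .
  have dOm: "(\<lambda>q. Om 1 q a b) differentiable (at p)" for a b
    unfolding Om_def dx_def dy_def dz_def dt_def using p by (simp add: atom_simps)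
  have dw: "(\<lambda>q. kahler_form gg (Jm 1) q a b) differentiable (at p)" for a b
    using diff_local[OF open_MM p _ dOm[of a b], of "\<lambda>q. kahler_form gg (Jm 1) q a b"] J_kf[OF _ s] by metis
  have pdphi: "pd i (\<lambda>r::real^4. exp (2 * A (r$3))) p = (if i = 3 then 2 * \<alpha> (p$3) * exp (2 * A (p$3)) else 0)" for i
    unfolding pd_Dv using Dv_p3[OF e2A_der[OF MM_V[OF p]]] .
  show ?thesis
    unfolding ext_d2_mult[OF dphi dw] lee[OF p]
    unfolding wedge12_def pdphi theta4_def dz_def
    by (simp add: algebra_simps)
qed


definition "Xv p = - aq p * b1q p / bq p + (aq p)^2 / 2 - 2 * (b1q p / bq p)^2 + deriv (deriv \<beta>) (p$3) / bq p"
definition "Yv p = ((H1 p)^2 + (H2 p)^2) / (Hq p)^2 - (Dv e1 (Dv e1 h) (xy p) + Dv e2 (Dv e2 h) (xy p)) / Hq p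
   - (Hq p)^2 * aq p / (2 * bq p) - (Hq p)^2 * b1q p / (bq p)^2"
definition "Wv p = (Dv e1 (Dv e2 h) (xy p) - Dv e2 (Dv e1 h) (xy p)) / Hq p"
definition "th3 p i = (dt p i - Lq p * dx p i - Nq p * dy p i) / bq p"
definition "RS p i j = Yv p * (dx p i * dx p j + dy p i * dy p j) + Wv p * (dx p i * dy p j - dy p i * dx p j)
   + Xv p * (dz p i * dz p j + th3 p i * th3 p j)"

lemma S_1_1: assumes p: "p \<in> MM" shows "Ricci gg p 1 1 = RS p 1 1"
  unfolding Ricci_Rc[OF p]
  by (simp add: Rc_def RS_def gg_simps th3_def Xv_def Yv_def Wv_def;
      (simp add: Eq_sol[OF p] a1_sol[OF p] aq_nz[OF p] bq_nz[OF p] Hq_nz[OF p] field_simps)?;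
      (algebra)?)

lemma S_1_2: assumes p: "p \<in> MM" shows "Ricci gg p 1 2 = RS p 1 2"
  unfolding Ricci_Rc[OF p]
  by (simp add: Rc_def RS_def gg_simps th3_def Xv_def Yv_def Wv_def;
      (simp add: Eq_sol[OF p] a1_sol[OF p] aq_nz[OF p] bq_nz[OF p] Hq_nz[OF p] field_simps)?;
      (algebra)?)

lemma S_1_3: assumes p: "p \<in> MM" shows "Ricci gg p 1 3 = RS p 1 3"
  unfolding Ricci_Rc[OF p]
  by (simp add: Rc_def RS_def gg_simps th3_def Xv_def Yv_def Wv_def;
      (simp add: Eq_sol[OF p] a1_sol[OF p] aq_nz[OF p] bq_nz[OF p] Hq_nz[OF p] field_simps)?;
      (algebra)?)

lemma S_1_4: assumes p: "p \<in> MM" shows "Ricci gg p 1 4 = RS p 1 4"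
  unfolding Ricci_Rc[OF p]
  by (simp add: Rc_def RS_def gg_simps th3_def Xv_def Yv_def Wv_def;
      (simp add: Eq_sol[OF p] a1_sol[OF p] aq_nz[OF p] bq_nz[OF p] Hq_nz[OF p] field_simps)?;
      (algebra)?)

lemma S_2_1: assumes p: "p \<in> MM" shows "Ricci gg p 2 1 = RS p 2 1"
  unfolding Ricci_Rc[OF p]
  by (simp add: Rc_def RS_def gg_simps th3_def Xv_def Yv_def Wv_def;
      (simp add: Eq_sol[OF p] a1_sol[OF p] aq_nz[OF p] bq_nz[OF p] Hq_nz[OF p] field_simps)?;
      (algebra)?)

lemma S_2_2: assumes p: "p \<in> MM" shows "Ricci gg p 2 2 = RS p 2 2"
  unfolding Ricci_Rc[OF p]
  by (simp add: Rc_def RS_def gg_simps th3_def Xv_def Yv_def Wv_def;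
      (simp add: Eq_sol[OF p] a1_sol[OF p] aq_nz[OF p] bq_nz[OF p] Hq_nz[OF p] field_simps)?;
      (algebra)?)

lemma S_2_3: assumes p: "p \<in> MM" shows "Ricci gg p 2 3 = RS p 2 3"
  unfolding Ricci_Rc[OF p]
  by (simp add: Rc_def RS_def gg_simps th3_def Xv_def Yv_def Wv_def;
      (simp add: Eq_sol[OF p] a1_sol[OF p] aq_nz[OF p] bq_nz[OF p] Hq_nz[OF p] field_simps)?;
      (algebra)?)

lemma S_2_4: assumes p: "p \<in> MM" shows "Ricci gg p 2 4 = RS p 2 4"
  unfolding Ricci_Rc[OF p]
  by (simp add: Rc_def RS_def gg_simps th3_def Xv_def Yv_def Wv_def;
      (simp add: Eq_sol[OF p] a1_sol[OF p] aq_nz[OF p] bq_nz[OF p] Hq_nz[OF p] field_simps)?;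
      (algebra)?)

lemma S_3_1: assumes p: "p \<in> MM" shows "Ricci gg p 3 1 = RS p 3 1"
  unfolding Ricci_Rc[OF p]
  by (simp add: Rc_def RS_def gg_simps th3_def Xv_def Yv_def Wv_def;
      (simp add: Eq_sol[OF p] a1_sol[OF p] aq_nz[OF p] bq_nz[OF p] Hq_nz[OF p] field_simps)?;
      (algebra)?)

lemma S_3_2: assumes p: "p \<in> MM" shows "Ricci gg p 3 2 = RS p 3 2"
  unfolding Ricci_Rc[OF p]
  by (simp add: Rc_def RS_def gg_simps th3_def Xv_def Yv_def Wv_def;
      (simp add: Eq_sol[OF p] a1_sol[OF p] aq_nz[OF p] bq_nz[OF p] Hq_nz[OF p] field_simps)?;
      (algebra)?)

lemma S_3_3: assumes p: "p \<in> MM" shows "Ricci gg p 3 3 = RS p 3 3"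
  unfolding Ricci_Rc[OF p]
  by (simp add: Rc_def RS_def gg_simps th3_def Xv_def Yv_def Wv_def;
      (simp add: Eq_sol[OF p] a1_sol[OF p] aq_nz[OF p] bq_nz[OF p] Hq_nz[OF p] field_simps)?;
      (algebra)?)

lemma S_3_4: assumes p: "p \<in> MM" shows "Ricci gg p 3 4 = RS p 3 4"
  unfolding Ricci_Rc[OF p]
  by (simp add: Rc_def RS_def gg_simps th3_def Xv_def Yv_def Wv_def;
      (simp add: Eq_sol[OF p] a1_sol[OF p] aq_nz[OF p] bq_nz[OF p] Hq_nz[OF p] field_simps)?;
      (algebra)?)

lemma S_4_1: assumes p: "p \<in> MM" shows "Ricci gg p 4 1 = RS p 4 1"
  unfolding Ricci_Rc[OF p]
  by (simp add: Rc_def RS_def gg_simps th3_def Xv_def Yv_def Wv_def;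
      (simp add: Eq_sol[OF p] a1_sol[OF p] aq_nz[OF p] bq_nz[OF p] Hq_nz[OF p] field_simps)?;
      (algebra)?)

lemma S_4_2: assumes p: "p \<in> MM" shows "Ricci gg p 4 2 = RS p 4 2"
  unfolding Ricci_Rc[OF p]
  by (simp add: Rc_def RS_def gg_simps th3_def Xv_def Yv_def Wv_def;
      (simp add: Eq_sol[OF p] a1_sol[OF p] aq_nz[OF p] bq_nz[OF p] Hq_nz[OF p] field_simps)?;
      (algebra)?)

lemma S_4_3: assumes p: "p \<in> MM" shows "Ricci gg p 4 3 = RS p 4 3"
  unfolding Ricci_Rc[OF p]
  by (simp add: Rc_def RS_def gg_simps th3_def Xv_def Yv_def Wv_def;
      (simp add: Eq_sol[OF p] a1_sol[OF p] aq_nz[OF p] bq_nz[OF p] Hq_nz[OF p] field_simps)?;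
      (algebra)?)

lemma S_4_4: assumes p: "p \<in> MM" shows "Ricci gg p 4 4 = RS p 4 4"
  unfolding Ricci_Rc[OF p]
  by (simp add: Rc_def RS_def gg_simps th3_def Xv_def Yv_def Wv_def;
      (simp add: Eq_sol[OF p] a1_sol[OF p] aq_nz[OF p] bq_nz[OF p] Hq_nz[OF p] field_simps)?;
      (algebra)?)

lemma Ricci_RS: assumes p: "p \<in> MM" shows "Ricci gg p i j = RS p i j"
proof -
  have "i = 1 \<or> i = 2 \<or> i = 3 \<or> i = 4" "j = 1 \<or> j = 2 \<or> j = 3 \<or> j = 4"
    using exhaust_4 by blast+
  thus ?thesis using S_1_1[OF p] S_1_2[OF p] S_1_3[OF p] S_1_4[OF p] S_2_1[OF p] S_2_2[OF p] S_2_3[OF p] S_2_4[OF p]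
    S_3_1[OF p] S_3_2[OF p] S_3_3[OF p] S_3_4[OF p] S_4_1[OF p] S_4_2[OF p] S_4_3[OF p] S_4_4[OF p]
    by (elim disjE) simp_all
qed

lemma ric_inv: assumes p: "p \<in> MM"
  shows "(\<Sum>k\<in>UNIV. \<Sum>l\<in>UNIV. Jm 1 p k i * Jm 1 p l j * Ricci gg p k l) = Ricci gg p i j"
  unfolding Ricci_RS[OF p]
  using split3[of i] split3[of j]
  by (elim disjE; simp add: sum_4 Jm_def Jc_defs RS_def th3_def gg_simps; (simp add: bq_nz[OF p] field_simps)?)

lemma lap_eq: assumes u: "u \<in> U"
  shows "laplacian2 (\<lambda>u. ln (h u)) u = (Dv e1 (Dv e1 h) u * h u - (Dv e1 h u)^2) / (h u)^2
     + (Dv e2 (Dv e2 h) u * h u - (Dv e2 h u)^2) / (h u)^2"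
proof -
  have l: "Dv c (\<lambda>v. Dv c (\<lambda>u. ln (h u)) v) u = Dv c (\<lambda>v. Dv c h v / h v) u" for c
  proof (rule Dv_local[OF oU u])
    fix x assume x: "x \<in> U"
    show "Dv c (\<lambda>u. ln (h u)) x = Dv c h x / h x"
      by (rule Dv_ln[OF hd[OF x]]) (use hpos x in auto)
  qed
  have hz: "h u \<noteq> 0" using hpos u by force
  have d1: "Dv e1 (\<lambda>v. Dv e1 h v / h v) u = (Dv e1 (Dv e1 h) u * h u - Dv e1 h u * Dv e1 h u) / (h u * h u)"
    using Dv_divide[OF hd1[OF u] hd[OF u] hz] by simp
  have d2: "Dv e2 (\<lambda>v. Dv e2 h v / h v) u = (Dv e2 (Dv e2 h) u * h u - Dv e2 h u * Dv e2 h u) / (h u * h u)"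
    using Dv_divide[OF hd2[OF u] hd[OF u] hz] by simp
  show ?thesis unfolding laplacian2_def Dv_def[symmetric] l d1 d2 by (simp add: power2_eq_square)
qed

lemma expA: "p \<in> MM \<Longrightarrow> exp (A (p$3)) = bq p * aq p"
  using bae[of p] unfolding Eq_def by (simp add: exp_minus field_simps)

lemma scal: assumes p: "p \<in> MM"
  shows "scalar_curv gg p =
            2 * (- laplacian2 (\<lambda>u. ln (h u)) (xy p) * exp (A (p$3)) / (h (xy p))\<^sup>2
                 - 2 * (\<alpha> (p$3))\<^sup>2 + 2 * deriv \<alpha> (p$3)
                 + deriv (deriv \<beta>) (p$3) / \<beta> (p$3)
                 - 2 * (deriv \<beta> (p$3) / \<beta> (p$3))\<^sup>2)"
  unfolding scalar_curv_def inv_metric_eq[OF p] Ricci_RS[OF p] lap_eq[OF MM_U[OF p]] expA[OF p]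
    Hq_def[symmetric] H1_def[symmetric] H2_def[symmetric] aq_def[symmetric] bq_def[symmetric] b1q_def[symmetric]
  by (simp add: sum_4 gi_def Let_def RS_def th3_def gg_simps Xv_def Yv_def Wv_def;
      (simp add: Eq_sol[OF p] a1_sol[OF p] aq_nz[OF p] bq_nz[OF p] Hq_nz[OF p] field_simps)?;
      (algebra)?)




lemma lin_p3: "linear (\<lambda>q::real^4. q$3)"
  using bounded_linear_vec_nth bounded_linear.linear by blast

lemma Ck_Lq: "Ck_on k MM Lq"
  unfolding Lq_def[abs_def]
  by (rule Ck_on_comp_lin[OF lin_xy open_MM oU]) (simp_all add: MM_U sl[unfolded smooth_on_def, rule_format])
lemma Ck_Nq: "Ck_on k MM Nq"
  unfolding Nq_def[abs_def]
  by (rule Ck_on_comp_lin[OF lin_xy open_MM oU]) (simp_all add: MM_U sn[unfolded smooth_on_def, rule_format])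
lemma Ck_bq: "Ck_on k MM bq"
  unfolding bq_def[abs_def]
  by (rule Ck_on_comp_lin[OF lin_p3 open_MM oV]) (simp_all add: MM_V b_k)
lemma Ck_ibq: "Ck_on k MM (\<lambda>q. 1 / bq q)"
  unfolding bq_def
  using Ck_on_comp_lin[OF lin_p3 open_MM oV _ bi_k] MM_V by blast
lemma Ck_Lb: "Ck_on k MM (\<lambda>q. Lq q / bq q)"
  using Ck_on_mult[OF open_MM Ck_Lq Ck_ibq] by simp
lemma Ck_Nb: "Ck_on k MM (\<lambda>q. Nq q / bq q)"
  using Ck_on_mult[OF open_MM Ck_Nq Ck_ibq] by simp

lemma J_smooth: "smooth_endo_on MM (Jm s)"
  unfolding smooth_endo_on_def smooth_on_def Jm_def
  by (intro allI Ck_on_add[OF open_MM] Ck_on_mult[OF open_MM] Ck_on_const[OF open_MM] Ck_Lq Ck_Nq Ck_bq Ck_ibq Ck_Lb Ck_Nb)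

lemma f_smooth: "smooth_on MM (\<lambda>r. 2 * A (r$3))"
  unfolding smooth_on_def
proof
  fix k
  have "Ck_on k V (\<lambda>z. 2 * A z)" by (rule Ck_on_mult[OF oV Ck_on_const[OF oV] A_k])
  thus "Ck_on k MM (\<lambda>r. 2 * A (r$3))"
    using Ck_on_comp_lin[OF lin_p3 open_MM oV] MM_V by blast
qed



lemma herm: "s * s = 1 \<Longrightarrow> hermitian_on MM gg (Jm s)"
  unfolding hermitian_on_def almost_complex_on_def orthogonal_on_def J_integrable_on_def
  using J_smooth J_sq J_orth J_nij by blast

lemma main:
  shows "(\<exists>Jb. kahler_on MM gg Jb \<and>
            (\<forall>p\<in>MM. \<forall>i j. kahler_form gg Jb p i j
               = omegaSigmaA h A p i j + wedge11 theta4 (theta3 \<beta> l2 n2) p i j))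
       \<and> (\<exists>J. hermitian_on MM gg J \<and>
            (\<forall>p\<in>MM. \<forall>i j. kahler_form gg J p i j
               = omegaSigmaA h A p i j + wedge11 (theta3 \<beta> l2 n2) theta4 p i j)
            \<and> ricci_J_invariant_on MM gg J
            \<and> lck_on MM gg J
            \<and> is_lee_form_on MM gg J (\<lambda>p i. - \<alpha> (p$3) * theta4 p i))
       \<and> (\<forall>p\<in>MM. scalar_curv gg p =
            2 * (- laplacian2 (\<lambda>u. ln (h u)) (xy p) * exp (A (p$3)) / (h (xy p))\<^sup>2
                 - 2 * (\<alpha> (p$3))\<^sup>2 + 2 * deriv \<alpha> (p$3)
                 + deriv (deriv \<beta>) (p$3) / \<beta> (p$3)
                 - 2 * (deriv \<beta> (p$3) / \<beta> (p$3))\<^sup>2))"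
proof (intro conjI)
  have s1: "(1::real) * 1 = 1" and s2: "(-1::real) * -1 = 1" by simp_all
  show "\<exists>Jb. kahler_on MM gg Jb \<and>
            (\<forall>p\<in>MM. \<forall>i j. kahler_form gg Jb p i j
               = omegaSigmaA h A p i j + wedge11 theta4 (theta3 \<beta> l2 n2) p i j)"
  proof (intro exI conjI)
    show "kahler_on MM gg (Jm (-1))"
      unfolding kahler_on_def using herm[OF s2] closed_bar by blast
    show "\<forall>p\<in>MM. \<forall>i j. kahler_form gg (Jm (-1)) p i j
               = omegaSigmaA h A p i j + wedge11 theta4 (theta3 \<beta> l2 n2) p i j"
      using J_kf[OF _ s2] Om2_eq by simp
  qed
  show "\<exists>J. hermitian_on MM gg J \<and>
            (\<forall>p\<in>MM. \<forall>i j. kahler_form gg J p i j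
               = omegaSigmaA h A p i j + wedge11 (theta3 \<beta> l2 n2) theta4 p i j)
            \<and> ricci_J_invariant_on MM gg J
            \<and> lck_on MM gg J
            \<and> is_lee_form_on MM gg J (\<lambda>p i. - \<alpha> (p$3) * theta4 p i)"
  proof (intro exI conjI)
    show "hermitian_on MM gg (Jm 1)" using herm[OF s1] .
    show "\<forall>p\<in>MM. \<forall>i j. kahler_form gg (Jm 1) p i j
               = omegaSigmaA h A p i j + wedge11 (theta3 \<beta> l2 n2) theta4 p i j"
      using J_kf[OF _ s1] Om1_eq by simp
    show "ricci_J_invariant_on MM gg (Jm 1)"
      unfolding ricci_J_invariant_on_def using ric_inv by blast
    show "is_lee_form_on MM gg (Jm 1) (\<lambda>p i. - \<alpha> (p$3) * theta4 p i)"
      unfolding is_lee_form_on_def using lee by blast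
    show "lck_on MM gg (Jm 1)"
      unfolding lck_on_def
    proof (intro conjI ballI)
      show "hermitian_on MM gg (Jm 1)" using herm[OF s1] .
      fix p assume p: "p \<in> MM"
      show "\<exists>W f. open W \<and> p \<in> W \<and> W \<subseteq> MM \<and> smooth_on W f \<and>
          (\<forall>q\<in>W. \<forall>i j k. ext_d2 (\<lambda>r a b. exp (f r) * kahler_form gg (Jm 1) r a b) q i j k = 0)"
        using open_MM p f_smooth lck_closed by blast
    qed
  qed
  show "\<forall>p\<in>MM. scalar_curv gg p =
            2 * (- laplacian2 (\<lambda>u. ln (h u)) (xy p) * exp (A (p$3)) / (h (xy p))\<^sup>2
                 - 2 * (\<alpha> (p$3))\<^sup>2 + 2 * deriv \<alpha> (p$3)
                 + deriv (deriv \<beta>) (p$3) / \<beta> (p$3)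
                 - 2 * (deriv \<beta> (p$3) / \<beta> (p$3))\<^sup>2)"
    using scal by blast
qed

end

theorem theorem1:
  fixes U :: "(real^2) set" and V :: "real set"
    and h l2 n2 :: "real^2 \<Rightarrow> real" and \<alpha> A \<beta> :: "real \<Rightarrow> real"
  assumes "open U" and "smooth_on U h" and "\<forall>u\<in>U. h u > 0"
    and "open V" and "smooth_on V \<alpha>" and "\<forall>z\<in>V. \<alpha> z \<noteq> 0"
    and "\<forall>z\<in>V. (A has_real_derivative \<alpha> z) (at z)"
    and "\<forall>z\<in>V. \<beta> z * \<alpha> z = exp (A z)"
    and "smooth_on U l2" and "smooth_on U n2"
    and "\<forall>u\<in>U. frechet_derivative n2 (at u) (axis 1 1) - frechet_derivative l2 (at u) (axis 2 1)
               = (h u)\<^sup>2"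
  defines "M \<equiv> {p :: real^4. xy p \<in> U \<and> p$3 \<in> V}"
    and "g \<equiv> gmet h A \<beta> l2 n2"
  shows "(\<exists>Jb. kahler_on M g Jb \<and>
            (\<forall>p\<in>M. \<forall>i j. kahler_form g Jb p i j
               = omegaSigmaA h A p i j + wedge11 theta4 (theta3 \<beta> l2 n2) p i j))
       \<and> (\<exists>J. hermitian_on M g J \<and>
            (\<forall>p\<in>M. \<forall>i j. kahler_form g J p i j
               = omegaSigmaA h A p i j + wedge11 (theta3 \<beta> l2 n2) theta4 p i j)
            \<and> ricci_J_invariant_on M g J
            \<and> lck_on M g J
            \<and> is_lee_form_on M g J (\<lambda>p i. - \<alpha> (p$3) * theta4 p i))
       \<and> (\<forall>p\<in>M. scalar_curv g p =
            2 * (- laplacian2 (\<lambda>u. ln (h u)) (xy p) * exp (A (p$3)) / (h (xy p))\<^sup>2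
                 - 2 * (\<alpha> (p$3))\<^sup>2 + 2 * deriv \<alpha> (p$3)
                 + deriv (deriv \<beta>) (p$3) / \<beta> (p$3)
                 - 2 * (deriv \<beta> (p$3) / \<beta> (p$3))\<^sup>2))"
  proof -
  interpret cdata U V h l2 n2 \<alpha> A \<beta>
    by (unfold_locales) (use assms in auto)
  have M: "M = MM" unfolding M_def MM_def ..
  have g: "g = gg" unfolding g_def gg_def ..
  show ?thesis unfolding M g by (rule main)
qed

end
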